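(* For any problem instance $(F,G)$, under full or partial information feedback, \[\mathrm{OPT}-O\big(\sqrt{T\log T}\big)\ \le\ \mathbb E_{\bm v,\bm p,\bm\gamma}\big[R^{\mathrm{thr}}(\bm v,\bm p,\bm\gamma)\big]\ \le\ \mathrm{OPT},\] where $R^{\mathrm{thr}}$ denotes the total revenue of the optimal online throttling strategy.
   Context: Model: constants $\bar v>0$, $\rho\in(0,\bar v]$; $T$ rounds; budget $B=\rho T$. Values $v_t$ i.i.d. from a distribution $F$ on $[0,\bar v]$; highest competing bids $p_t$ i.i.d. from a distribution $G$ on $[0,\bar v]$, independent of values, unknown to the buyer. Each round the buyer chooses $x_t\in\{0,1\}$ after seeing $v_t$, receiving $x_t(v_t-p_t)^+$ and paying $x_tp_t\mathbf 1[v_t\ge p_t]$. An online throttling strategy sets $x_t=\beta_t(\mathcal H_t,v_t,\gamma_t)$, with internal randomness $\gamma_t$ and history $\mathcal H_t=(v_\tau,x_\tau,p_\tau)_{\tau<t}$ (full information) or $(v_\tau,x_\tau,x_\tau p_\tau)_{\tau<t}$ (partial information); total payment must stay within $B$; its revenue is $R^\beta=\sum_{t=1}^{T_0}x_t(v_t-p_t)^+$ with $T_0$ the last round with $x_t=1$. The optimal throttling strategy is one maximizing the expected total revenue $\mathbb E_{\bm v,\bm p,\bm\gamma}[R^\beta]$ in the given information model. $\mathrm{OPT}=T\max_{\pi:[0,\bar v]\to[0,1]}\mathbb E_{v\sim F,p\sim G}[\pi(v)(v-p)^+]$ s.t. $\mathbb E_{v\sim F,p\sim G}[\pi(v)p\mathbf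 1[v\ge p]]\le\rho$. *)

theory Defs
  imports "HOL-Probability.Probability"
begin

datatype info = Full | Partial

definition observe :: "info \<Rightarrow> bool \<Rightarrow> real \<Rightarrow> real" where
  "observe I x p = (case I of Full \<Rightarrow> p | Partial \<Rightarrow> (if x then p else 0))"

text \<open>A throttling strategy: round index t (0-based), history (list of past
  (v_tau, x_tau, observation_tau) for tau < t), current value v_t, internal randomness gamma_t;
  returns x_t.\<close>
type_synonym strategy = "nat \<Rightarrow> (real \<times> bool \<times> real) list \<Rightarrow> real \<Rightarrow> real \<Rightarrow> bool"

text \<open>An outcome: omega t = (v_t, p_t, gamma_t).\<close>
type_synonym outcome = "nat \<Rightarrow> real \<times> real \<times> real"

definition history :: "info \<Rightarrow> outcome \<Rightarrow> bool list \<Rightarrow> (real \<times> bool \<times> real) list" where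
  "history I \<omega> ds =
     map (\<lambda>\<tau>. (fst (\<omega> \<tau>), ds ! \<tau>, observe I (ds ! \<tau>) (fst (snd (\<omega> \<tau>))))) [0..<length ds]"

primrec decisions :: "info \<Rightarrow> strategy \<Rightarrow> outcome \<Rightarrow> nat \<Rightarrow> bool list" where
  "decisions I \<beta> \<omega> 0 = []"
| "decisions I \<beta> \<omega> (Suc t) =
     (let ds = decisions I \<beta> \<omega> t
      in ds @ [\<beta> t (history I \<omega> ds) (fst (\<omega> t)) (snd (snd (\<omega> t)))])"

definition decision :: "info \<Rightarrow> strategy \<Rightarrow> outcome \<Rightarrow> nat \<Rightarrow> bool" where
  "decision I \<beta> \<omega> t = decisions I \<beta> \<omega> (Suc t) ! t"

definition revenue :: "info \<Rightarrow> strategy \<Rightarrow> nat \<Rightarrow> outcome \<Rightarrow> real" where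
  "revenue I \<beta> T \<omega> =
     (\<Sum>t<T. if decision I \<beta> \<omega> t then max 0 (fst (\<omega> t) - fst (snd (\<omega> t))) else 0)"

definition payment :: "info \<Rightarrow> strategy \<Rightarrow> nat \<Rightarrow> outcome \<Rightarrow> real" where
  "payment I \<beta> T \<omega> =
     (\<Sum>t<T. if decision I \<beta> \<omega> t \<and> fst (snd (\<omega> t)) \<le> fst (\<omega> t) then fst (snd (\<omega> t)) else 0)"

definition budget_feasible :: "info \<Rightarrow> real \<Rightarrow> real \<Rightarrow> nat \<Rightarrow> strategy \<Rightarrow> bool" where
  "budget_feasible I vbar \<rho> T \<beta> \<longleftrightarrow>
     (\<forall>\<omega>. (\<forall>t<T. fst (\<omega> t) \<in> {0..vbar} \<and> fst (snd (\<omega> t)) \<in> {0..vbar}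
                \<and> snd (snd (\<omega> t)) \<in> {0..1})
          \<longrightarrow> payment I \<beta> T \<omega> \<le> \<rho> * real T)"

definition sample_space :: "real measure \<Rightarrow> real measure \<Rightarrow> nat \<Rightarrow> outcome measure" where
  "sample_space F G T =
     PiM {..<T} (\<lambda>_. F \<Otimes>\<^sub>M (G \<Otimes>\<^sub>M uniform_measure lborel {0..1}))"

definition admissible :: "info \<Rightarrow> real \<Rightarrow> real \<Rightarrow> real measure \<Rightarrow> real measure \<Rightarrow> nat \<Rightarrow> strategy \<Rightarrow> bool" where
  "admissible I vbar \<rho> F G T \<beta> \<longleftrightarrow>
     budget_feasible I vbar \<rho> T \<beta> \<and> revenue I \<beta> T \<in> borel_measurable (sample_space F G T)"

definition thr_value :: "info \<Rightarrow> real \<Rightarrow> real \<Rightarrow> real measure \<Rightarrow> real measure \<Rightarrow> nat \<Rightarrow> real" where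
  "thr_value I vbar \<rho> F G T =
     Sup ((\<lambda>\<beta>. integral\<^sup>L (sample_space F G T) (revenue I \<beta> T)) ` {\<beta>. admissible I vbar \<rho> F G T \<beta>})"

definition OPT :: "real measure \<Rightarrow> real measure \<Rightarrow> real \<Rightarrow> nat \<Rightarrow> real" where
  "OPT F G \<rho> T = real T * Sup {integral\<^sup>L (F \<Otimes>\<^sub>M G) (\<lambda>(v, p). \<pi> v * max 0 (v - p)) | \<pi>.
        \<pi> \<in> borel_measurable borel \<and> (\<forall>v. 0 \<le> \<pi> v \<and> \<pi> v \<le> 1) \<and>
        integral\<^sup>L (F \<Otimes>\<^sub>M G) (\<lambda>(v, p). \<pi> v * (if p \<le> v then p else 0)) \<le> \<rho>}"

definition valid_dist :: "real \<Rightarrow> real measure \<Rightarrow> bool" where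
  "valid_dist vbar F \<longleftrightarrow> prob_space F \<and> sets F = sets borel \<and> measure F {0..vbar} = 1"

end

theory Submission
  imports Defs
begin

lemma length_decisions[simp]: "length (decisions I \<beta> \<omega> t) = t"
  by (induction t) (simp_all add: Let_def)

lemma decisions_nth: "\<tau> < t \<Longrightarrow> decisions I \<beta> \<omega> t ! \<tau> = decision I \<beta> \<omega> \<tau>"
proof (induction t)
  case 0 then show ?case by simp
next
  case (Suc t)
  show ?case
  proof (cases "\<tau> < t")
    case True
    then show ?thesis using Suc by (simp add: Let_def nth_append)
  next
    case False
    then have "\<tau> = t" using Suc.prems by simp
    then show ?thesis by (simp add: decision_def)
  qed
qed

lemma decision_eq: "decision I \<beta> \<omega> t =
   \<beta> t (history I \<omega> (decisions I \<beta> \<omega> t)) (fst (\<omega> t)) (snd (snd (\<omega> t)))"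
  by (simp add: decision_def Let_def nth_append)

lemma history_cong:
  assumes "\<And>\<tau>. \<tau> < length ds \<Longrightarrow> \<omega> \<tau> = \<omega>' \<tau>"
  shows "history I \<omega> ds = history I \<omega>' ds"
  using assms unfolding history_def by auto

lemma decisions_local:
  assumes "\<And>\<tau>. \<tau> < t \<Longrightarrow> \<omega> \<tau> = \<omega>' \<tau>"
  shows "decisions I \<beta> \<omega> t = decisions I \<beta> \<omega>' t"
  using assms
proof (induction t)
  case 0 then show ?case by simp
next
  case (Suc t)
  then have ds: "decisions I \<beta> \<omega> t = decisions I \<beta> \<omega>' t" by simp
  have h: "history I \<omega> (decisions I \<beta> \<omega> t) = history I \<omega>' (decisions I \<beta> \<omega> t)"
    by (rule history_cong) (use Suc.prems in simp)
  show ?case using Suc.prems[of t] by (simp add: Let_def ds h[unfolded ds])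
qed

lemma decision_local:
  assumes "\<And>\<tau>. \<tau> < t \<Longrightarrow> \<omega> \<tau> = \<omega>' \<tau>"
    and "fst (\<omega> t) = fst (\<omega>' t)" and "snd (snd (\<omega> t)) = snd (snd (\<omega>' t))"
  shows "decision I \<beta> \<omega> t = decision I \<beta> \<omega>' t"
proof -
  have ds: "decisions I \<beta> \<omega> t = decisions I \<beta> \<omega>' t" by (rule decisions_local) (use assms in simp)
  have h: "history I \<omega> (decisions I \<beta> \<omega> t) = history I \<omega>' (decisions I \<beta> \<omega> t)"
    by (rule history_cong) (use assms in simp)
  show ?thesis unfolding decision_eq using h ds assms by simp
qed

lemma measurable_update_comp:
  assumes k: "k \<in> I" and g: "g \<in> measurable (N k) (N k)"
  shows "(\<lambda>x. x(k := g (x k))) \<in> measurable (PiM I N) (PiM I N)"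
proof -
  have "(\<lambda>x i. (if i = k then g (x k) else x i)) \<in> measurable (PiM I N) (PiM I N)"
  proof (rule measurable_PiM_single')
    fix i assume i: "i \<in> I"
    show "(\<lambda>x. if i = k then g (x k) else x i) \<in> measurable (PiM I N) (N i)"
    proof (cases "i = k")
      case True then show ?thesis using measurable_comp[OF measurable_component_singleton[OF k, of N] g]
        by (simp add: comp_def)
    next
      case False then show ?thesis using i by simp
    qed
  next
    show "(\<lambda>x i. if i = k then g (x k) else x i) \<in> space (PiM I N) \<rightarrow> (\<Pi>\<^sub>E i\<in>I. space (N i))"
      using k g by (auto simp: space_PiM PiE_iff measurable_space extensional_def)
  qed
  moreover have "(\<lambda>x i. (if i = k then g (x k) else x i)) = (\<lambda>x. x(k := g (x k)))"
    by (auto simp: fun_eq_iff)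
  ultimately show ?thesis by simp
qed

definition rterm :: "info \<Rightarrow> strategy \<Rightarrow> outcome \<Rightarrow> nat \<Rightarrow> real" where
  "rterm I \<beta> x t = (if decision I \<beta> x t then max 0 (fst (x t) - fst (snd (x t))) else 0)"

definition Qs :: "info \<Rightarrow> strategy \<Rightarrow> nat \<Rightarrow> outcome \<Rightarrow> real" where
  "Qs I \<beta> k x = (\<Sum>t<k. rterm I \<beta> x t)"

lemma revenue_Qs: "revenue I \<beta> T = Qs I \<beta> T"
  by (simp add: fun_eq_iff revenue_def Qs_def rterm_def)

lemma Qs_upd: "Qs I \<beta> k x = Qs I \<beta> (Suc k) (x(k := (fst (x k), fst (x k), snd (snd (x k)))))"
proof -
  let ?y = "x(k := (fst (x k), fst (x k), snd (snd (x k))))"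
  have "rterm I \<beta> ?y k = 0" by (simp add: rterm_def)
  moreover have "rterm I \<beta> ?y t = rterm I \<beta> x t" if "t < k" for t
  proof -
    have "decision I \<beta> ?y t = decision I \<beta> x t"
      by (rule decision_local) (use that in auto)
    then show ?thesis using that by (simp add: rterm_def)
  qed
  ultimately show ?thesis by (simp add: Qs_def)
qed

lemma decision_via_Qs:
  "decision I \<beta> x k \<longleftrightarrow>
    (\<lambda>y. Qs I \<beta> (Suc k) y - Qs I \<beta> k y) (x(k := (fst (x k), fst (x k) - 1, snd (snd (x k))))) = 1"
proof -
  let ?y = "x(k := (fst (x k), fst (x k) - 1, snd (snd (x k))))"
  have d: "decision I \<beta> ?y k = decision I \<beta> x k"
    by (rule decision_local) auto
  have "Qs I \<beta> (Suc k) ?y - Qs I \<beta> k ?y = rterm I \<beta> ?y k" by (simp add: Qs_def)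
  also have "\<dots> = (if decision I \<beta> x k then 1 else 0)" using d by (simp add: rterm_def)
  finally show ?thesis by simp
qed

lemma decisions_measurable:
  assumes R: "revenue I \<beta> T \<in> borel_measurable (PiM {..<T} N)"
    and g1: "\<And>k. (\<lambda>y. (fst y, fst y, snd (snd y)) :: real \<times> real \<times> real) \<in> measurable (N k) (N k)"
    and g2: "\<And>k. (\<lambda>y. (fst y, fst y - 1, snd (snd y)) :: real \<times> real \<times> real) \<in> measurable (N k) (N k)"
    and k: "k < T"
  shows "(\<lambda>x. decision I \<beta> x k) \<in> measurable (PiM {..<T} N) (count_space UNIV)"
proof -
  have Q: "Qs I \<beta> j \<in> borel_measurable (PiM {..<T} N)" if "j \<le> T" for j
    using that
  proof (induction j rule: inc_induct)
    case base then show ?case using R by (simp add: revenue_Qs)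
  next
    case (step n)
    have "Qs I \<beta> n = (\<lambda>x. Qs I \<beta> (Suc n) (x(n := (fst (x n), fst (x n), snd (snd (x n))))))"
      using Qs_upd by (auto simp: fun_eq_iff)
    also have "\<dots> \<in> borel_measurable (PiM {..<T} N)"
      using measurable_comp[OF measurable_update_comp[of n "{..<T}" "\<lambda>y. (fst y, fst y, snd (snd y))" N] step.IH]
      using g1 step.hyps by (simp add: comp_def)
    finally show ?case .
  qed
  let ?f = "\<lambda>y. Qs I \<beta> (Suc k) y - Qs I \<beta> k y"
  have f: "?f \<in> borel_measurable (PiM {..<T} N)" using Q k by auto
  have fu: "(\<lambda>x. ?f (x(k := (fst (x k), fst (x k) - 1, snd (snd (x k)))))) \<in> borel_measurable (PiM {..<T} N)"
    using measurable_comp[OF measurable_update_comp[of k "{..<T}" "\<lambda>y. (fst y, fst y - 1, snd (snd y))" N] f]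
    using g2 k by (simp add: comp_def)
  have "(\<lambda>x. decision I \<beta> x k) = (\<lambda>x. ?f (x(k := (fst (x k), fst (x k) - 1, snd (snd (x k))))) = 1)"
    using decision_via_Qs by (auto simp: fun_eq_iff)
  also have "\<dots> \<in> measurable (PiM {..<T} N) (count_space UNIV)"
    using fu by measurable
  finally show ?thesis .
qed

definition Um :: "real measure" where "Um = uniform_measure lborel {0..1}"
definition Km :: "real measure \<Rightarrow> real measure \<Rightarrow> (real \<times> real \<times> real) measure" where
  "Km F G = F \<Otimes>\<^sub>M (G \<Otimes>\<^sub>M Um)"

lemma sample_space_Km: "sample_space F G T = PiM {..<T} (\<lambda>_. Km F G)"
  by (simp add: sample_space_def Km_def Um_def)

lemma prob_Um: "prob_space Um"
  unfolding Um_def by (rule prob_space_uniform_measure) auto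

lemma sets_Um[measurable_cong]: "sets Um = sets borel"
  by (simp add: Um_def)

lemma space_Um[simp]: "space Um = UNIV"
  using sets_eq_imp_space_eq[OF sets_Um] by simp

locale two_dists =
  fixes F G :: "real measure"
  assumes F: "prob_space F" and G: "prob_space G"
    and sF[measurable_cong]: "sets F = sets borel" and sG[measurable_cong]: "sets G = sets borel"
begin

lemma space_F[simp]: "space F = UNIV" using sets_eq_imp_space_eq[OF sF] by simp
lemma space_G[simp]: "space G = UNIV" using sets_eq_imp_space_eq[OF sG] by simp

lemma prob_K: "prob_space (Km F G)"
  unfolding Km_def
  by (intro prob_space_pair F G prob_Um)

lemma sets_K[measurable_cong]: "sets (Km F G) = sets (borel \<Otimes>\<^sub>M (borel \<Otimes>\<^sub>M borel))"
  unfolding Km_def by (intro sets_pair_measure_cong sF sG sets_Um)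

lemma space_K[simp]: "space (Km F G) = UNIV"
  by (simp add: Km_def space_pair_measure)

lemma sf_K: "product_sigma_finite (\<lambda>_. Km F G)"
  unfolding product_sigma_finite_def
  using prob_K prob_space_imp_sigma_finite by blast

end

lemma upd_pair_measurable:
  assumes "t \<notin> J"
  shows "(\<lambda>(c, x). x(t := c)) \<in> measurable (N t \<Otimes>\<^sub>M PiM J N) (PiM (insert t J) N)"
proof -
  have "(\<lambda>z i. (if i = t then fst z else snd z i)) \<in> measurable (N t \<Otimes>\<^sub>M PiM J N) (PiM (insert t J) N)"
  proof (rule measurable_PiM_single')
    fix i assume i: "i \<in> insert t J"
    show "(\<lambda>z. if i = t then fst z else snd z i) \<in> measurable (N t \<Otimes>\<^sub>M PiM J N) (N i)"
    proof (cases "i = t")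
      case True then show ?thesis by simp
    next
      case False then have "i \<in> J" using i by simp
      then show ?thesis using False by simp
    qed
  next
    show "(\<lambda>z i. if i = t then fst z else snd z i) \<in> space (N t \<Otimes>\<^sub>M PiM J N) \<rightarrow> (\<Pi>\<^sub>E i\<in>insert t J. space (N i))"
      using assms by (auto simp: space_pair_measure space_PiM PiE_iff extensional_def split: if_splits)
  qed
  moreover have "(\<lambda>z i. (if i = t then fst z else snd z i)) = (\<lambda>(c, x). x(t := c))"
    by (auto simp: fun_eq_iff)
  ultimately show ?thesis by simp
qed

context two_dists begin

definition phi :: "info \<Rightarrow> strategy \<Rightarrow> nat \<Rightarrow> nat \<Rightarrow> real \<Rightarrow> ennreal" where
  "phi I \<beta> T t v = (\<integral>\<^sup>+\<gamma>. (\<integral>\<^sup>+x. (if decision I \<beta> (x(t := (v, 0, \<gamma>))) t then 1 else 0)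
      \<partial>PiM ({..<T} - {t}) (\<lambda>_. Km F G)) \<partial>Um)"

lemma ins: "t < T \<Longrightarrow> insert t ({..<T} - {t}) = {..<T}" by auto

lemma D_upd_measurable:
  assumes t: "t < T"
    and D: "(\<lambda>x. decision I \<beta> x t) \<in> measurable (PiM {..<T} (\<lambda>_. Km F G)) (count_space UNIV)"
  shows "(\<lambda>(c, x). decision I \<beta> (x(t := c)) t) \<in> measurable (Km F G \<Otimes>\<^sub>M PiM ({..<T} - {t}) (\<lambda>_. Km F G)) (count_space UNIV)"
proof -
  have D': "(\<lambda>x. decision I \<beta> x t) \<in> measurable (PiM (insert t ({..<T} - {t})) (\<lambda>_. Km F G)) (count_space UNIV)"
    using D ins[OF t] by simp
  have "(\<lambda>x. decision I \<beta> x t) \<circ> (\<lambda>(c, x). x(t := c)) \<in> measurable (Km F G \<Otimes>\<^sub>M PiM ({..<T} - {t}) (\<lambda>_. Km F G)) (count_space UNIV)"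
    by (rule measurable_comp[OF upd_pair_measurable D']) simp
  moreover have "(\<lambda>x. decision I \<beta> x t) \<circ> (\<lambda>(c, x). x(t := c)) = (\<lambda>(c, x). decision I \<beta> (x(t := c)) t)"
    by (auto simp: fun_eq_iff)
  ultimately show ?thesis by simp
qed

lemma psi_measurable:
  assumes t: "t < T"
    and D: "(\<lambda>x. decision I \<beta> x t) \<in> measurable (PiM {..<T} (\<lambda>_. Km F G)) (count_space UNIV)"
  shows "(\<lambda>(v, \<gamma>). \<integral>\<^sup>+x. (if decision I \<beta> (x(t := (v, 0, \<gamma>))) t then 1 else 0)
      \<partial>PiM ({..<T} - {t}) (\<lambda>_. Km F G)) \<in> borel_measurable (borel \<Otimes>\<^sub>M borel)"
proof -
  interpret P: prob_space "PiM ({..<T} - {t}) (\<lambda>_. Km F G)"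
    by (intro prob_space_PiM prob_K) 
  have m1: "(\<lambda>(z::real \<times> real, x). ((fst z, 0::real, snd z), x)) \<in> measurable ((borel \<Otimes>\<^sub>M borel) \<Otimes>\<^sub>M PiM ({..<T} - {t}) (\<lambda>_. Km F G)) (Km F G \<Otimes>\<^sub>M PiM ({..<T} - {t}) (\<lambda>_. Km F G))"
    by measurable
  have "(\<lambda>(z::real \<times> real, x). decision I \<beta> (x(t := (fst z, 0, snd z))) t) \<in> measurable ((borel \<Otimes>\<^sub>M borel) \<Otimes>\<^sub>M PiM ({..<T} - {t}) (\<lambda>_. Km F G)) (count_space UNIV)"
    using measurable_comp[OF m1 D_upd_measurable[OF t D]] by (simp add: comp_def case_prod_beta')
  then have "(\<lambda>(z::real \<times> real, x). (if decision I \<beta> (x(t := (fst z, 0, snd z))) t then 1 else 0) :: ennreal) \<in> borel_measurable ((borel \<Otimes>\<^sub>M borel) \<Otimes>\<^sub>M PiM ({..<T} - {t}) (\<lambda>_. Km F G))"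
    by (simp add: case_prod_beta')
  from P.borel_measurable_nn_integral_fst[OF this]
  show ?thesis by (simp add: case_prod_beta')
qed

end

lemma meas2:
  assumes "(\<lambda>z. h (fst z) (snd z)) \<in> borel_measurable (borel \<Otimes>\<^sub>M borel)"
    and "a \<in> borel_measurable M" and "b \<in> borel_measurable M"
  shows "(\<lambda>x. h (a x) (b x)) \<in> borel_measurable M"
  using measurable_comp[OF measurable_Pair[OF assms(2,3)] assms(1)] by (simp add: comp_def)

context two_dists begin

definition psi :: "info \<Rightarrow> strategy \<Rightarrow> nat \<Rightarrow> nat \<Rightarrow> real \<Rightarrow> real \<Rightarrow> ennreal" where
  "psi I \<beta> T t v \<gamma> = (\<integral>\<^sup>+x. (if decision I \<beta> (x(t := (v, 0, \<gamma>))) t then 1 else 0)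
      \<partial>PiM ({..<T} - {t}) (\<lambda>_. Km F G))"

lemma phi_psi: "phi I \<beta> T t v = (\<integral>\<^sup>+\<gamma>. psi I \<beta> T t v \<gamma> \<partial>Um)"
  by (simp add: phi_def psi_def)

lemma psi_meas:
  assumes t: "t < T"
    and D: "(\<lambda>x. decision I \<beta> x t) \<in> measurable (PiM {..<T} (\<lambda>_. Km F G)) (count_space UNIV)"
  shows "(\<lambda>z. psi I \<beta> T t (fst z) (snd z)) \<in> borel_measurable (borel \<Otimes>\<^sub>M borel)"
  using psi_measurable[OF t D] by (simp add: psi_def case_prod_beta')

lemma term_integral:
  assumes t: "t < T"
    and D: "(\<lambda>x. decision I \<beta> x t) \<in> measurable (PiM {..<T} (\<lambda>_. Km F G)) (count_space UNIV)"
    and g[measurable]: "(\<lambda>z. g (fst z) (snd z)) \<in> borel_measurable (borel \<Otimes>\<^sub>M borel)"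
  shows "(\<integral>\<^sup>+x. (if decision I \<beta> x t then g (fst (x t)) (fst (snd (x t))) else 0) \<partial>PiM {..<T} (\<lambda>_. Km F G))
       = (\<integral>\<^sup>+z. phi I \<beta> T t (fst z) * g (fst z) (snd z) \<partial>(F \<Otimes>\<^sub>M G))"
proof -
  interpret PS: product_sigma_finite "\<lambda>_. Km F G" by (rule sf_K)
  interpret PJ: prob_space "PiM ({..<T} - {t}) (\<lambda>_. Km F G)"
    by (intro prob_space_PiM prob_K)
  interpret PU: prob_space Um by (rule prob_Um)
  interpret PG: prob_space G by (rule G)
  interpret PF: prob_space F by (rule F)
  interpret PGU: prob_space "G \<Otimes>\<^sub>M Um" by (intro prob_space_pair G prob_Um)
  let ?J = "{..<T} - {t}"
  have psim[measurable]: "(\<lambda>z. psi I \<beta> T t (fst z) (snd z)) \<in> borel_measurable (borel \<Otimes>\<^sub>M borel)"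
    by (rule psi_meas[OF t D])
  note gA[measurable (raw)] = meas2[OF g]
  note psiA[measurable (raw)] = meas2[OF psim]
  have phim[measurable]: "phi I \<beta> T t \<in> borel_measurable borel"
  proof -
    have "(\<lambda>z. psi I \<beta> T t (fst z) (snd z)) \<in> borel_measurable (borel \<Otimes>\<^sub>M Um)"
      using psim by (simp add: measurable_cong_sets[OF sets_pair_measure_cong[OF refl sets_Um] refl])
    from PU.borel_measurable_nn_integral_fst[OF this] show ?thesis
      by (simp add: phi_psi[abs_def])
  qed
  have DU: "(\<lambda>(c, x). decision I \<beta> (x(t := c)) t) \<in> measurable (Km F G \<Otimes>\<^sub>M PiM ?J (\<lambda>_. Km F G)) (count_space UNIV)"
    by (rule D_upd_measurable[OF t D])
  define f where "f x = (if decision I \<beta> x t then g (fst (x t)) (fst (snd (x t))) else 0)" for x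
  have fm: "f \<in> borel_measurable (PiM (insert t ?J) (\<lambda>_. Km F G))"
  proof -
    have "f \<in> borel_measurable (PiM {..<T} (\<lambda>_. Km F G))"
    proof -
      have Dp[measurable]: "Measurable.pred (PiM {..<T} (\<lambda>_. Km F G)) (\<lambda>x. decision I \<beta> x t)"
        using D by (simp add: pred_def)
      have xt: "(\<lambda>x. x t) \<in> measurable (PiM {..<T} (\<lambda>_. Km F G)) (borel \<Otimes>\<^sub>M (borel \<Otimes>\<^sub>M borel))"
        using measurable_component_singleton[of t "{..<T}" "\<lambda>_. Km F G"] t
        by (simp add: measurable_cong_sets[OF refl sets_K])
      have pm: "(\<lambda>z::real\<times>real\<times>real. (fst z, fst (snd z))) \<in> measurable (borel \<Otimes>\<^sub>M (borel \<Otimes>\<^sub>M borel)) (borel \<Otimes>\<^sub>M borel)"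
        by measurable
      have g2: "(\<lambda>z::real\<times>real\<times>real. g (fst z) (fst (snd z))) \<in> borel_measurable (borel \<Otimes>\<^sub>M (borel \<Otimes>\<^sub>M borel))"
        using measurable_comp[OF pm g] by (simp add: comp_def)
      have gm[measurable]: "(\<lambda>x. g (fst (x t)) (fst (snd (x t)))) \<in> borel_measurable (PiM {..<T} (\<lambda>_. Km F G))"
        using measurable_comp[OF xt g2] by (simp add: comp_def)
      show ?thesis unfolding f_def by measurable
    qed
    then show ?thesis using ins[OF t] by simp
  qed
  have "(\<integral>\<^sup>+x. f x \<partial>PiM {..<T} (\<lambda>_. Km F G)) = (\<integral>\<^sup>+x. f x \<partial>PiM (insert t ?J) (\<lambda>_. Km F G))"
    using ins[OF t] by simp
  also have "\<dots> = (\<integral>\<^sup>+y. (\<integral>\<^sup>+x. f (x(t := y)) \<partial>PiM ?J (\<lambda>_. Km F G)) \<partial>Km F G)"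
    by (rule PS.product_nn_integral_insert_rev[OF _ _ fm]) auto
  also have "\<dots> = (\<integral>\<^sup>+y. g (fst y) (fst (snd y)) * psi I \<beta> T t (fst y) (snd (snd y)) \<partial>Km F G)"
  proof (rule nn_integral_cong)
    fix y :: "real \<times> real \<times> real"
    have eq: "f (x(t := y)) = g (fst y) (fst (snd y)) * (if decision I \<beta> (x(t := (fst y, 0, snd (snd y)))) t then 1 else 0)" for x
    proof -
      have "decision I \<beta> (x(t := y)) t = decision I \<beta> (x(t := (fst y, 0, snd (snd y)))) t"
        by (rule decision_local) auto
      then show ?thesis by (simp add: f_def)
    qed
    have m: "(\<lambda>x. (if decision I \<beta> (x(t := (fst y, 0, snd (snd y)))) t then 1 else 0) :: ennreal) \<in> borel_measurable (PiM ?J (\<lambda>_. Km F G))"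
    proof -
      have "(\<lambda>x. (\<lambda>(c, x). decision I \<beta> (x(t := c)) t) ((fst y, 0, snd (snd y)), x)) \<in> measurable (PiM ?J (\<lambda>_. Km F G)) (count_space UNIV)"
        by (rule measurable_compose_Pair1[OF _ DU]) simp
      then show ?thesis by simp
    qed
    show "(\<integral>\<^sup>+x. f (x(t := y)) \<partial>PiM ?J (\<lambda>_. Km F G)) = g (fst y) (fst (snd y)) * psi I \<beta> T t (fst y) (snd (snd y))"
      unfolding eq psi_def by (rule nn_integral_cmult[OF m])
  qed
  also have "\<dots> = (\<integral>\<^sup>+v. (\<integral>\<^sup>+w. g v (fst w) * psi I \<beta> T t v (snd w) \<partial>(G \<Otimes>\<^sub>M Um)) \<partial>F)"
    unfolding Km_def
    by (rule PGU.nn_integral_fst[symmetric, where f="\<lambda>y. g (fst y) (fst (snd y)) * psi I \<beta> T t (fst y) (snd (snd y))", simplified]) measurable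
  also have "\<dots> = (\<integral>\<^sup>+v. (\<integral>\<^sup>+p. g v p * phi I \<beta> T t v \<partial>G) \<partial>F)"
  proof (rule nn_integral_cong)
    fix v :: real
    have "(\<integral>\<^sup>+w. g v (fst w) * psi I \<beta> T t v (snd w) \<partial>(G \<Otimes>\<^sub>M Um)) = (\<integral>\<^sup>+p. (\<integral>\<^sup>+\<gamma>. g v p * psi I \<beta> T t v \<gamma> \<partial>Um) \<partial>G)"
      by (rule PU.nn_integral_fst[symmetric, where f="\<lambda>w. g v (fst w) * psi I \<beta> T t v (snd w)", simplified]) measurable
    also have "\<dots> = (\<integral>\<^sup>+p. g v p * phi I \<beta> T t v \<partial>G)"
      unfolding phi_psi by (intro nn_integral_cong nn_integral_cmult) measurable
    finally show "(\<integral>\<^sup>+w. g v (fst w) * psi I \<beta> T t v (snd w) \<partial>(G \<Otimes>\<^sub>M Um)) = (\<integral>\<^sup>+p. g v p * phi I \<beta> T t v \<partial>G)" .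
  qed
  also have "\<dots> = (\<integral>\<^sup>+z. phi I \<beta> T t (fst z) * g (fst z) (snd z) \<partial>(F \<Otimes>\<^sub>M G))"
    by (subst PG.nn_integral_fst[symmetric]) (auto simp: mult.commute intro!: phim)
  finally show ?thesis unfolding f_def .
qed

end

context two_dists begin

lemma psi_le1: "psi I \<beta> T t v \<gamma> \<le> 1"
proof -
  interpret PJ: prob_space "PiM ({..<T} - {t}) (\<lambda>_. Km F G)"
    by (intro prob_space_PiM prob_K)
  have "psi I \<beta> T t v \<gamma> \<le> (\<integral>\<^sup>+x. 1 \<partial>PiM ({..<T} - {t}) (\<lambda>_. Km F G))"
    unfolding psi_def by (intro nn_integral_mono) auto
  then show ?thesis using PJ.emeasure_space_1 by simp
qed

lemma phi_le1: "phi I \<beta> T t v \<le> 1"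
proof -
  interpret PU: prob_space Um by (rule prob_Um)
  have "phi I \<beta> T t v \<le> (\<integral>\<^sup>+x. 1 \<partial>Um)"
    unfolding phi_psi by (intro nn_integral_mono psi_le1)
  then show ?thesis using PU.emeasure_space_1 by simp
qed

lemma phi_meas:
  assumes t: "t < T"
    and D: "(\<lambda>x. decision I \<beta> x t) \<in> measurable (PiM {..<T} (\<lambda>_. Km F G)) (count_space UNIV)"
  shows "phi I \<beta> T t \<in> borel_measurable borel"
proof -
  interpret PU: prob_space Um by (rule prob_Um)
  have "(\<lambda>z. psi I \<beta> T t (fst z) (snd z)) \<in> borel_measurable (borel \<Otimes>\<^sub>M Um)"
    using psi_meas[OF t D] by (simp add: measurable_cong_sets[OF sets_pair_measure_cong[OF refl sets_Um] refl])
  from PU.borel_measurable_nn_integral_fst[OF this] show ?thesis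
    by (simp add: phi_psi[abs_def])
qed

lemma sum_integral:
  assumes D: "\<And>t. t < T \<Longrightarrow> (\<lambda>x. decision I \<beta> x t) \<in> measurable (PiM {..<T} (\<lambda>_. Km F G)) (count_space UNIV)"
    and g: "(\<lambda>z. g (fst z) (snd z)) \<in> borel_measurable (borel \<Otimes>\<^sub>M borel)"
    and g0: "\<And>a b. 0 \<le> g a b"
  shows "(\<integral>\<^sup>+x. ennreal (\<Sum>t<T. if decision I \<beta> x t then g (fst (x t)) (fst (snd (x t))) else 0) \<partial>PiM {..<T} (\<lambda>_. Km F G))
       = (\<integral>\<^sup>+z. ennreal ((\<Sum>t<T. enn2real (phi I \<beta> T t (fst z))) * g (fst z) (snd z)) \<partial>(F \<Otimes>\<^sub>M G))"
proof -
  have ge: "(\<lambda>z. ennreal (g (fst z) (snd z))) \<in> borel_measurable (borel \<Otimes>\<^sub>M borel)"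
    using g by measurable
  have "(\<integral>\<^sup>+x. ennreal (\<Sum>t<T. if decision I \<beta> x t then g (fst (x t)) (fst (snd (x t))) else 0) \<partial>PiM {..<T} (\<lambda>_. Km F G))
     = (\<integral>\<^sup>+x. (\<Sum>t<T. (if decision I \<beta> x t then ennreal (g (fst (x t)) (fst (snd (x t)))) else 0)) \<partial>PiM {..<T} (\<lambda>_. Km F G))"
    by (intro nn_integral_cong) (auto simp: g0 intro!: sum.cong simp flip: sum_ennreal)
  also have "\<dots> = (\<Sum>t<T. (\<integral>\<^sup>+x. (if decision I \<beta> x t then ennreal (g (fst (x t)) (fst (snd (x t)))) else 0) \<partial>PiM {..<T} (\<lambda>_. Km F G)))"
  proof (rule nn_integral_sum)
    fix t assume "t \<in> {..<T}"
    then have t: "t < T" by simp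
    have Dp[measurable]: "Measurable.pred (PiM {..<T} (\<lambda>_. Km F G)) (\<lambda>x. decision I \<beta> x t)"
      using D[OF t] by (simp add: pred_def)
    have xt: "(\<lambda>x. x t) \<in> measurable (PiM {..<T} (\<lambda>_. Km F G)) (borel \<Otimes>\<^sub>M (borel \<Otimes>\<^sub>M borel))"
      using measurable_component_singleton[of t "{..<T}" "\<lambda>_. Km F G"] t
      by (simp add: measurable_cong_sets[OF refl sets_K])
    have pm: "(\<lambda>z::real\<times>real\<times>real. (fst z, fst (snd z))) \<in> measurable (borel \<Otimes>\<^sub>M (borel \<Otimes>\<^sub>M borel)) (borel \<Otimes>\<^sub>M borel)"
      by measurable
    have gm[measurable]: "(\<lambda>x. ennreal (g (fst (x t)) (fst (snd (x t))))) \<in> borel_measurable (PiM {..<T} (\<lambda>_. Km F G))"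
      using measurable_comp[OF measurable_comp[OF xt pm] ge] by (simp add: comp_def)
    show "(\<lambda>x. if decision I \<beta> x t then ennreal (g (fst (x t)) (fst (snd (x t)))) else 0) \<in> borel_measurable (PiM {..<T} (\<lambda>_. Km F G))"
      by measurable
  qed
  also have "\<dots> = (\<Sum>t<T. (\<integral>\<^sup>+z. phi I \<beta> T t (fst z) * ennreal (g (fst z) (snd z)) \<partial>(F \<Otimes>\<^sub>M G)))"
    by (intro sum.cong refl term_integral[OF _ D ge]) auto
  also have "\<dots> = (\<integral>\<^sup>+z. (\<Sum>t<T. phi I \<beta> T t (fst z) * ennreal (g (fst z) (snd z))) \<partial>(F \<Otimes>\<^sub>M G))"
  proof (rule nn_integral_sum[symmetric])
    fix t assume "t \<in> {..<T}"
    then have t: "t < T" by simp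
    note phim[measurable] = phi_meas[OF t D[OF t]]
    have ge'[measurable]: "(\<lambda>z. ennreal (g (fst z) (snd z))) \<in> borel_measurable (F \<Otimes>\<^sub>M G)"
      using ge by (simp add: measurable_cong_sets[OF sets_pair_measure_cong[OF sF sG] refl])
    show "(\<lambda>z. phi I \<beta> T t (fst z) * ennreal (g (fst z) (snd z))) \<in> borel_measurable (F \<Otimes>\<^sub>M G)"
      by measurable
  qed
  also have "\<dots> = (\<integral>\<^sup>+z. ennreal ((\<Sum>t<T. enn2real (phi I \<beta> T t (fst z))) * g (fst z) (snd z)) \<partial>(F \<Otimes>\<^sub>M G))"
  proof (rule nn_integral_cong)
    fix z :: "real \<times> real"
    have fin: "phi I \<beta> T t (fst z) = ennreal (enn2real (phi I \<beta> T t (fst z)))" for t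
      using phi_le1[of I \<beta> T t "fst z"] by (simp add: ennreal_enn2real_if top_unique) (metis ennreal_enn2real ennreal_one_neq_top neq_top_trans)
    have "(\<Sum>t<T. phi I \<beta> T t (fst z) * ennreal (g (fst z) (snd z)))
        = (\<Sum>t<T. ennreal (enn2real (phi I \<beta> T t (fst z)) * g (fst z) (snd z)))"
      by (intro sum.cong refl, subst fin) (simp add: ennreal_mult g0)
    also have "\<dots> = ennreal (\<Sum>t<T. enn2real (phi I \<beta> T t (fst z)) * g (fst z) (snd z))"
      by (rule sum_ennreal) (simp add: g0)
    finally show "(\<Sum>t<T. phi I \<beta> T t (fst z) * ennreal (g (fst z) (snd z))) = ennreal ((\<Sum>t<T. enn2real (phi I \<beta> T t (fst z))) * g (fst z) (snd z))"
      by (simp add: sum_distrib_right)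
  qed
  finally show ?thesis .
qed

end

locale vdists = two_dists +
  fixes vbar :: real
  assumes vbar: "0 < vbar" and mF: "measure F {0..vbar} = 1" and mG: "measure G {0..vbar} = 1"
begin

lemma AE_F: "AE v in F. 0 \<le> v \<and> v \<le> vbar"
proof -
  interpret PF: prob_space F by (rule F)
  have "AE v in F. v \<in> {0..vbar}"
    by (subst PF.AE_in_set_eq_1) (simp_all add: sF mF)
  then show ?thesis by simp
qed

lemma AE_G: "AE v in G. 0 \<le> v \<and> v \<le> vbar"
proof -
  interpret PG: prob_space G by (rule G)
  have "AE v in G. v \<in> {0..vbar}"
    by (subst PG.AE_in_set_eq_1) (simp_all add: sG mG)
  then show ?thesis by simp
qed

lemma AE_U: "AE v in Um. 0 \<le> v \<and> v \<le> 1"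
proof -
  interpret PU: prob_space Um by (rule prob_Um)
  have "AE v in Um. v \<in> {0..1}"
    by (subst PU.AE_in_set_eq_1) (simp_all add: sets_Um Um_def measure_def emeasure_uniform_measure)
  then show ?thesis by simp
qed

lemma AE_FG: "AE z in F \<Otimes>\<^sub>M G. (0 \<le> fst z \<and> fst z \<le> vbar) \<and> (0 \<le> snd z \<and> snd z \<le> vbar)"
proof -
  interpret PF: prob_space F by (rule F)
  interpret PG: prob_space G by (rule G)
  interpret P: pair_sigma_finite F G by unfold_locales
  show ?thesis
  proof (rule P.AE_pair_measure)
    show "{x \<in> space (F \<Otimes>\<^sub>M G). (0 \<le> fst x \<and> fst x \<le> vbar) \<and> 0 \<le> snd x \<and> snd x \<le> vbar} \<in> sets (F \<Otimes>\<^sub>M G)"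
      by measurable
    show "AE x in F. AE y in G. (0 \<le> fst (x, y) \<and> fst (x, y) \<le> vbar) \<and> 0 \<le> snd (x, y) \<and> snd (x, y) \<le> vbar"
      by (rule eventually_mono[OF AE_F], rule eventually_mono[OF AE_G]) simp
  qed
qed

lemma AE_K: "AE y in Km F G. (0 \<le> fst y \<and> fst y \<le> vbar) \<and> (0 \<le> fst (snd y) \<and> fst (snd y) \<le> vbar) \<and> (0 \<le> snd (snd y) \<and> snd (snd y) \<le> 1)"
proof -
  interpret PF: prob_space F by (rule F)
  interpret PG: prob_space G by (rule G)
  interpret PU: prob_space Um by (rule prob_Um)
  interpret PGU: prob_space "G \<Otimes>\<^sub>M Um" by (intro prob_space_pair G prob_Um)
  interpret P: pair_sigma_finite G Um by unfold_locales
  interpret P2: pair_sigma_finite F "G \<Otimes>\<^sub>M Um" by unfold_locales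
  have GU: "AE w in G \<Otimes>\<^sub>M Um. (0 \<le> fst w \<and> fst w \<le> vbar) \<and> (0 \<le> snd w \<and> snd w \<le> 1)"
  proof (rule P.AE_pair_measure)
    show "{x \<in> space (G \<Otimes>\<^sub>M Um). (0 \<le> fst x \<and> fst x \<le> vbar) \<and> 0 \<le> snd x \<and> snd x \<le> 1} \<in> sets (G \<Otimes>\<^sub>M Um)"
      by measurable
    show "AE x in G. AE y in Um. (0 \<le> fst (x, y) \<and> fst (x, y) \<le> vbar) \<and> 0 \<le> snd (x, y) \<and> snd (x, y) \<le> 1"
      by (rule eventually_mono[OF AE_G], rule eventually_mono[OF AE_U]) simp
  qed
  show ?thesis unfolding Km_def
  proof (rule P2.AE_pair_measure)
    show "{x \<in> space (F \<Otimes>\<^sub>M (G \<Otimes>\<^sub>M Um)). (0 \<le> fst x \<and> fst x \<le> vbar) \<and> (0 \<le> fst (snd x) \<and> fst (snd x) \<le> vbar) \<and> (0 \<le> snd (snd x) \<and> snd (snd x) \<le> 1)} \<in> sets (F \<Otimes>\<^sub>M (G \<Otimes>\<^sub>M Um))"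
      by measurable
    show "AE x in F. AE y in G \<Otimes>\<^sub>M Um. (0 \<le> fst (x, y) \<and> fst (x, y) \<le> vbar) \<and> (0 \<le> fst (snd (x, y)) \<and> fst (snd (x, y)) \<le> vbar) \<and> (0 \<le> snd (snd (x, y)) \<and> snd (snd (x, y)) \<le> 1)"
      by (rule eventually_mono[OF AE_F], rule eventually_mono[OF GU]) auto
  qed
qed

lemma AE_M: "AE x in PiM {..<(T::nat)} (\<lambda>_. Km F G). \<forall>t<T. (0 \<le> fst (x t) \<and> fst (x t) \<le> vbar) \<and> (0 \<le> fst (snd (x t)) \<and> fst (snd (x t)) \<le> vbar) \<and> (0 \<le> snd (snd (x t)) \<and> snd (snd (x t)) \<le> 1)"
proof -
  have "AE x in PiM {..<T} (\<lambda>_. Km F G). \<forall>t\<in>{..<T}. (0 \<le> fst (x t) \<and> fst (x t) \<le> vbar) \<and> (0 \<le> fst (snd (x t)) \<and> fst (snd (x t)) \<le> vbar) \<and> (0 \<le> snd (snd (x t)) \<and> snd (snd (x t)) \<le> 1)"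
  proof (rule eventually_ball_finite[OF finite_lessThan], intro ballI)
    fix t assume "t \<in> {..<T}"
    then show "AE x in PiM {..<T} (\<lambda>_. Km F G). (0 \<le> fst (x t) \<and> fst (x t) \<le> vbar) \<and> (0 \<le> fst (snd (x t)) \<and> fst (snd (x t)) \<le> vbar) \<and> (0 \<le> snd (snd (x t)) \<and> snd (snd (x t)) \<le> 1)"
      using AE_PiM_component[of "{..<T}" "\<lambda>_. Km F G" t, OF prob_K _ AE_K] by simp
  qed
  then show ?thesis by (rule eventually_mono) auto
qed

end

definition LPset :: "real measure \<Rightarrow> real measure \<Rightarrow> real \<Rightarrow> real set" where
  "LPset F G \<rho> = {integral\<^sup>L (F \<Otimes>\<^sub>M G) (\<lambda>(v, p). \<pi> v * max 0 (v - p)) | \<pi>.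
        \<pi> \<in> borel_measurable borel \<and> (\<forall>v. 0 \<le> \<pi> v \<and> \<pi> v \<le> 1) \<and>
        integral\<^sup>L (F \<Otimes>\<^sub>M G) (\<lambda>(v, p). \<pi> v * (if p \<le> v then p else 0)) \<le> \<rho>}"

lemma OPT_LPset: "OPT F G \<rho> T = real T * Sup (LPset F G \<rho>)"
  by (simp add: OPT_def LPset_def)

context vdists begin

lemma LP_le: 
  assumes "\<pi> \<in> borel_measurable borel" "\<And>v. 0 \<le> \<pi> v \<and> \<pi> v \<le> 1"
  shows "integral\<^sup>L (F \<Otimes>\<^sub>M G) (\<lambda>(v, p). \<pi> v * max 0 (v - p)) \<le> vbar"
proof -
  interpret PFG: prob_space "F \<Otimes>\<^sub>M G" by (intro prob_space_pair F G)
  note [measurable] = assms(1)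
  have "integral\<^sup>L (F \<Otimes>\<^sub>M G) (\<lambda>(v, p). \<pi> v * max 0 (v - p)) = enn2real (\<integral>\<^sup>+z. ennreal ((\<lambda>(v, p). \<pi> v * max 0 (v - p)) z) \<partial>(F \<Otimes>\<^sub>M G))"
    by (rule integral_eq_nn_integral) (auto simp: assms(2))
  moreover have "(\<integral>\<^sup>+z. ennreal ((\<lambda>(v, p). \<pi> v * max 0 (v - p)) z) \<partial>(F \<Otimes>\<^sub>M G)) \<le> (\<integral>\<^sup>+z. ennreal vbar \<partial>(F \<Otimes>\<^sub>M G))"
  proof (rule nn_integral_mono_AE)
    show "AE z in F \<Otimes>\<^sub>M G. ennreal ((\<lambda>(v, p). \<pi> v * max 0 (v - p)) z) \<le> ennreal vbar"
    proof (rule eventually_mono[OF AE_FG])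
      fix z :: "real \<times> real" assume z: "(0 \<le> fst z \<and> fst z \<le> vbar) \<and> (0 \<le> snd z \<and> snd z \<le> vbar)"
      have "\<pi> (fst z) * max 0 (fst z - snd z) \<le> 1 * vbar"
        using z assms(2)[of "fst z"] by (intro mult_mono) auto
      then show "ennreal ((\<lambda>(v, p). \<pi> v * max 0 (v - p)) z) \<le> ennreal vbar"
        by (auto simp: case_prod_beta' intro!: ennreal_leI)
    qed
  qed
  moreover have "(\<integral>\<^sup>+z. ennreal vbar \<partial>(F \<Otimes>\<^sub>M G)) = ennreal vbar"
    by (simp add: PFG.emeasure_space_1)
  ultimately show ?thesis
    using vbar enn2real_mono[of _ "ennreal vbar"] by fastforce
qed

lemma LP_bdd: "bdd_above (LPset F G \<rho>)"
  unfolding LPset_def bdd_above_def using LP_le by blast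

lemma LP_zero: "0 \<le> \<rho> \<Longrightarrow> 0 \<in> LPset F G \<rho>"
  unfolding LPset_def by (rule CollectI, rule exI[of _ "\<lambda>_. 0"]) (simp add: case_prod_unfold)

end

context vdists begin

lemma upper_one:
  assumes adm: "admissible I vbar \<rho> F G T \<beta>" and rho: "0 < \<rho>"
  shows "integral\<^sup>L (sample_space F G T) (revenue I \<beta> T) \<le> OPT F G \<rho> T"
proof (cases "T = 0")
  case True
  have "revenue I \<beta> 0 = (\<lambda>_. 0)" by (simp add: fun_eq_iff revenue_def)
  then show ?thesis using True by (simp add: OPT_def)
next
  case False
  then have T: "0 < T" by simp
  let ?M = "PiM {..<T} (\<lambda>_. Km F G)"
  interpret PM: prob_space ?M by (intro prob_space_PiM prob_K)
  interpret PFG: prob_space "F \<Otimes>\<^sub>M G" by (intro prob_space_pair F G)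
  have Rm: "revenue I \<beta> T \<in> borel_measurable ?M"
    using adm by (simp add: admissible_def sample_space_Km)
  have bf: "budget_feasible I vbar \<rho> T \<beta>" using adm by (simp add: admissible_def)
  have g1: "\<And>k. (\<lambda>y. (fst y, fst y, snd (snd y)) :: real \<times> real \<times> real) \<in> measurable (Km F G) (Km F G)"
    by (simp add: measurable_cong_sets[OF sets_K sets_K])
  have g2: "\<And>k. (\<lambda>y. (fst y, fst y - 1, snd (snd y)) :: real \<times> real \<times> real) \<in> measurable (Km F G) (Km F G)"
    by (simp add: measurable_cong_sets[OF sets_K sets_K])
  have D: "\<And>t. t < T \<Longrightarrow> (\<lambda>x. decision I \<beta> x t) \<in> measurable ?M (count_space UNIV)"
    by (rule decisions_measurable[OF Rm g1 g2])
  define \<pi> where "\<pi> v = (\<Sum>t<T. enn2real (phi I \<beta> T t v)) / real T" for v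
  have \<pi>m[measurable]: "\<pi> \<in> borel_measurable borel"
  proof -
    have [measurable]: "phi I \<beta> T t \<in> borel_measurable borel" if "t \<in> {..<T}" for t
      using phi_meas[OF _ D] that by simp
    show ?thesis unfolding \<pi>_def[abs_def] by measurable
  qed
  have e01: "0 \<le> enn2real (phi I \<beta> T t v) \<and> enn2real (phi I \<beta> T t v) \<le> 1" for t v
    using enn2real_mono[OF phi_le1[of I \<beta> T t v]] by simp
  have \<pi>01: "0 \<le> \<pi> v \<and> \<pi> v \<le> 1" for v
  proof -
    have "(\<Sum>t<T. enn2real (phi I \<beta> T t v)) \<le> (\<Sum>t<T. 1)"
      by (intro sum_mono) (use e01 in auto)
    moreover have "0 \<le> (\<Sum>t<T. enn2real (phi I \<beta> T t v))"
      by (intro sum_nonneg) (use e01 in auto)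
    ultimately show ?thesis using T by (simp add: \<pi>_def divide_le_eq_1)
  qed
  have sumT: "(\<Sum>t<T. enn2real (phi I \<beta> T t v)) = real T * \<pi> v" for v
    using T by (simp add: \<pi>_def)
  have hm: "(\<lambda>z::real\<times>real. max 0 (fst z - snd z)) \<in> borel_measurable (borel \<Otimes>\<^sub>M borel)" by measurable
  have revsum: "revenue I \<beta> T x = (\<Sum>t<T. if decision I \<beta> x t then max 0 (fst (x t) - fst (snd (x t))) else 0)" for x
    by (simp add: revenue_def)
  have "(\<integral>\<^sup>+x. ennreal (revenue I \<beta> T x) \<partial>?M) = (\<integral>\<^sup>+z. ennreal ((\<Sum>t<T. enn2real (phi I \<beta> T t (fst z))) * max 0 (fst z - snd z)) \<partial>(F \<Otimes>\<^sub>M G))"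
    unfolding revsum by (rule sum_integral[OF D hm]) auto
  also have "\<dots> = (\<integral>\<^sup>+z. ennreal (real T) * ennreal (\<pi> (fst z) * max 0 (fst z - snd z)) \<partial>(F \<Otimes>\<^sub>M G))"
    by (intro nn_integral_cong) (simp add: sumT ennreal_mult[symmetric] \<pi>01 mult.assoc)
  also have "\<dots> = ennreal (real T) * (\<integral>\<^sup>+z. ennreal (\<pi> (fst z) * max 0 (fst z - snd z)) \<partial>(F \<Otimes>\<^sub>M G))"
    by (rule nn_integral_cmult) measurable
  finally have revN: "(\<integral>\<^sup>+x. ennreal (revenue I \<beta> T x) \<partial>?M) = ennreal (real T) * (\<integral>\<^sup>+z. ennreal (\<pi> (fst z) * max 0 (fst z - snd z)) \<partial>(F \<Otimes>\<^sub>M G))" .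
  define L where "L = integral\<^sup>L (F \<Otimes>\<^sub>M G) (\<lambda>(v, p). \<pi> v * max 0 (v - p))"
  have L_eq: "L = enn2real (\<integral>\<^sup>+z. ennreal (\<pi> (fst z) * max 0 (fst z - snd z)) \<partial>(F \<Otimes>\<^sub>M G))"
    unfolding L_def by (subst integral_eq_nn_integral) (auto simp: \<pi>01 case_prod_beta')
  have rev_eq: "integral\<^sup>L (sample_space F G T) (revenue I \<beta> T) = real T * L"
  proof -
    have "integral\<^sup>L ?M (revenue I \<beta> T) = enn2real (\<integral>\<^sup>+x. ennreal (revenue I \<beta> T x) \<partial>?M)"
      by (rule integral_eq_nn_integral[OF Rm]) (auto simp: revsum intro!: sum_nonneg)
    then show ?thesis by (simp add: sample_space_Km revN L_eq enn2real_mult)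
  qed
  define c where "c a b = (if 0 \<le> b \<and> b \<le> a then b else (0::real))" for a b
  have cm: "(\<lambda>z. c (fst z) (snd z)) \<in> borel_measurable (borel \<Otimes>\<^sub>M borel)" unfolding c_def by measurable
  have c0: "0 \<le> c a b" for a b by (simp add: c_def)
  have "(\<integral>\<^sup>+x. ennreal (\<Sum>t<T. if decision I \<beta> x t then c (fst (x t)) (fst (snd (x t))) else 0) \<partial>?M)
      = (\<integral>\<^sup>+z. ennreal ((\<Sum>t<T. enn2real (phi I \<beta> T t (fst z))) * c (fst z) (snd z)) \<partial>(F \<Otimes>\<^sub>M G))"
    by (rule sum_integral[OF D cm c0])
  also have "\<dots> = (\<integral>\<^sup>+z. ennreal (real T) * ennreal (\<pi> (fst z) * c (fst z) (snd z)) \<partial>(F \<Otimes>\<^sub>M G))"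
    by (intro nn_integral_cong) (simp add: sumT ennreal_mult[symmetric] \<pi>01 c0 mult.assoc)
  also have "\<dots> = ennreal (real T) * (\<integral>\<^sup>+z. ennreal (\<pi> (fst z) * c (fst z) (snd z)) \<partial>(F \<Otimes>\<^sub>M G))"
    using cm by (intro nn_integral_cmult) measurable
  finally have payN: "(\<integral>\<^sup>+x. ennreal (\<Sum>t<T. if decision I \<beta> x t then c (fst (x t)) (fst (snd (x t))) else 0) \<partial>?M)
      = ennreal (real T) * (\<integral>\<^sup>+z. ennreal (\<pi> (fst z) * c (fst z) (snd z)) \<partial>(F \<Otimes>\<^sub>M G))" .
  have "(\<integral>\<^sup>+x. ennreal (\<Sum>t<T. if decision I \<beta> x t then c (fst (x t)) (fst (snd (x t))) else 0) \<partial>?M)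
      \<le> (\<integral>\<^sup>+x. ennreal (\<rho> * real T) \<partial>?M)"
  proof (rule nn_integral_mono_AE, rule eventually_mono[OF AE_M])
    fix x :: outcome assume x: "\<forall>t<T. (0 \<le> fst (x t) \<and> fst (x t) \<le> vbar) \<and> (0 \<le> fst (snd (x t)) \<and> fst (snd (x t)) \<le> vbar) \<and> (0 \<le> snd (snd (x t)) \<and> snd (snd (x t)) \<le> 1)"
    have "payment I \<beta> T x \<le> \<rho> * real T"
      using bf x unfolding budget_feasible_def by auto
    moreover have "(\<Sum>t<T. if decision I \<beta> x t then c (fst (x t)) (fst (snd (x t))) else 0) = payment I \<beta> T x"
      unfolding payment_def c_def using x by (intro sum.cong) auto
    ultimately show "ennreal (\<Sum>t<T. if decision I \<beta> x t then c (fst (x t)) (fst (snd (x t))) else 0) \<le> ennreal (\<rho> * real T)"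
      by (simp add: ennreal_leI)
  qed
  also have "\<dots> = ennreal (\<rho> * real T)" by (simp add: PM.emeasure_space_1)
  finally have "ennreal (real T) * (\<integral>\<^sup>+z. ennreal (\<pi> (fst z) * c (fst z) (snd z)) \<partial>(F \<Otimes>\<^sub>M G)) \<le> ennreal (real T) * ennreal \<rho>"
    using payN rho by (simp add: ennreal_mult mult.commute)
  then have Y: "(\<integral>\<^sup>+z. ennreal (\<pi> (fst z) * c (fst z) (snd z)) \<partial>(F \<Otimes>\<^sub>M G)) \<le> ennreal \<rho>"
    using T by (simp add: ennreal_mult_le_mult_iff)
  have "integral\<^sup>L (F \<Otimes>\<^sub>M G) (\<lambda>(v, p). \<pi> v * (if p \<le> v then p else 0)) = integral\<^sup>L (F \<Otimes>\<^sub>M G) (\<lambda>z. \<pi> (fst z) * c (fst z) (snd z))"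
    by (rule integral_cong_AE) (auto simp: c_def case_prod_beta' intro!: eventually_mono[OF AE_FG])
  also have "\<dots> = enn2real (\<integral>\<^sup>+z. ennreal (\<pi> (fst z) * c (fst z) (snd z)) \<partial>(F \<Otimes>\<^sub>M G))"
    using cm by (subst integral_eq_nn_integral) (auto simp: \<pi>01 c0)
  also have "\<dots> \<le> \<rho>" using Y rho enn2real_mono[OF Y] by simp
  finally have cons: "integral\<^sup>L (F \<Otimes>\<^sub>M G) (\<lambda>(v, p). \<pi> v * (if p \<le> v then p else 0)) \<le> \<rho>" .
  have "L \<in> LPset F G \<rho>"
    unfolding LPset_def L_def using \<pi>m \<pi>01 cons by blast
  then have "L \<le> Sup (LPset F G \<rho>)" by (intro cSup_upper LP_bdd)
  then show ?thesis using rev_eq by (simp add: OPT_LPset mult_left_mono)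
qed

end

definition cc :: "real \<Rightarrow> real \<Rightarrow> real \<Rightarrow> real" where
  "cc vbar a b = (if 0 \<le> b \<and> b \<le> a \<and> b \<le> vbar then b else 0)"

definition spent :: "real \<Rightarrow> (real \<times> bool \<times> real) list \<Rightarrow> real" where
  "spent vbar h = sum_list (map (\<lambda>(v, x, ob). if x then cc vbar v ob else 0) h)"

definition strat :: "real \<Rightarrow> real \<Rightarrow> nat \<Rightarrow> (real \<Rightarrow> real) \<Rightarrow> strategy" where
  "strat vbar \<rho> T \<pi> t h v \<gamma> = (spent vbar h + vbar \<le> \<rho> * real T \<and> \<gamma> < \<pi> v)"

lemma cc_bounds: "0 \<le> vbar \<Longrightarrow> 0 \<le> cc vbar a b \<and> cc vbar a b \<le> vbar"
  by (simp add: cc_def)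

lemma spent_hist:
  "spent vbar (history I x (decisions I \<beta> x t)) =
     (\<Sum>\<tau><t. if decision I \<beta> x \<tau> then cc vbar (fst (x \<tau>)) (fst (snd (x \<tau>))) else 0)"
proof -
  have "spent vbar (history I x (decisions I \<beta> x t)) =
     sum_list (map (\<lambda>\<tau>. if decision I \<beta> x \<tau> then cc vbar (fst (x \<tau>)) (fst (snd (x \<tau>))) else 0) [0..<t])"
    unfolding spent_def history_def
    by (simp add: comp_def) (intro arg_cong[where f=sum_list] map_cong refl, auto simp: decisions_nth observe_def split: info.splits)
  also have "\<dots> = (\<Sum>\<tau><t. if decision I \<beta> x \<tau> then cc vbar (fst (x \<tau>)) (fst (snd (x \<tau>))) else 0)"
    by (simp add: sum_list_map_eq_sum_count2 atLeast0LessThan[symmetric] sum_set_upt_conv_sum_list_nat[symmetric])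
  finally show ?thesis .
qed

abbreviation sdec where "sdec I vbar \<rho> T \<pi> x t \<equiv> decision I (strat vbar \<rho> T \<pi>) x t"

lemma strat_decision:
  "sdec I vbar \<rho> T \<pi> x t \<longleftrightarrow>
    (\<Sum>\<tau><t. if sdec I vbar \<rho> T \<pi> x \<tau> then cc vbar (fst (x \<tau>)) (fst (snd (x \<tau>))) else 0) + vbar \<le> \<rho> * real T
    \<and> snd (snd (x t)) < \<pi> (fst (x t))"
  by (subst decision_eq) (simp add: strat_def spent_hist)

definition Yv :: "real \<Rightarrow> (real \<Rightarrow> real) \<Rightarrow> real \<times> real \<times> real \<Rightarrow> real" where
  "Yv vbar \<pi> y = (if snd (snd y) < \<pi> (fst y) then cc vbar (fst y) (fst (snd y)) else 0)"

lemma Yv_bounds: "0 \<le> vbar \<Longrightarrow> 0 \<le> Yv vbar \<pi> y \<and> Yv vbar \<pi> y \<le> vbar"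
  by (simp add: Yv_def cc_bounds)

lemma coupling:
  assumes vbar: "0 \<le> vbar" and good: "(\<Sum>\<tau><T. Yv vbar \<pi> (x \<tau>)) + vbar \<le> \<rho> * real T"
  shows "t < T \<Longrightarrow> sdec I vbar \<rho> T \<pi> x t \<longleftrightarrow> snd (snd (x t)) < \<pi> (fst (x t))"
proof (induction t rule: less_induct)
  case (less t)
  have "(\<Sum>\<tau><t. if sdec I vbar \<rho> T \<pi> x \<tau> then cc vbar (fst (x \<tau>)) (fst (snd (x \<tau>))) else 0) = (\<Sum>\<tau><t. Yv vbar \<pi> (x \<tau>))"
    using less by (intro sum.cong) (auto simp: Yv_def)
  also have "\<dots> \<le> (\<Sum>\<tau><T. Yv vbar \<pi> (x \<tau>))"
    using less.prems by (intro sum_mono2) (auto simp: Yv_bounds[OF vbar])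
  finally show ?case using good by (subst strat_decision) auto
qed

lemma strat_budget:
  assumes vbar: "0 \<le> vbar" and rho: "0 \<le> \<rho>"
  shows "budget_feasible I vbar \<rho> T (strat vbar \<rho> T \<pi>)"
  unfolding budget_feasible_def
proof (intro allI impI)
  fix x :: outcome
  assume x: "\<forall>t<T. fst (x t) \<in> {0..vbar} \<and> fst (snd (x t)) \<in> {0..vbar} \<and> snd (snd (x t)) \<in> {0..1}"
  let ?a = "\<lambda>\<tau>. if sdec I vbar \<rho> T \<pi> x \<tau> then cc vbar (fst (x \<tau>)) (fst (snd (x \<tau>))) else 0"
  have pay: "payment I (strat vbar \<rho> T \<pi>) T x = (\<Sum>\<tau><T. ?a \<tau>)"
    unfolding payment_def using x by (intro sum.cong) (auto simp: cc_def)
  have "n \<le> T \<Longrightarrow> (\<Sum>\<tau><n. ?a \<tau>) \<le> \<rho> * real T" for n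
  proof (induction n)
    case 0 then show ?case using rho by simp
  next
    case (Suc n)
    show ?case
    proof (cases "sdec I vbar \<rho> T \<pi> x n")
      case True
      then have "(\<Sum>\<tau><n. ?a \<tau>) + vbar \<le> \<rho> * real T" by (subst (asm) strat_decision) simp
      moreover have "?a n \<le> vbar" using cc_bounds[OF vbar] vbar by simp
      ultimately show ?thesis by simp
    next
      case False
      then show ?thesis using Suc by simp
    qed
  qed
  then show "payment I (strat vbar \<rho> T \<pi>) T x \<le> \<rho> * real T" using pay by simp
qed

context two_dists begin

lemma comp_meas:
  assumes "\<tau> < T"
  shows "(\<lambda>x. fst (x \<tau>)) \<in> borel_measurable (PiM {..<T} (\<lambda>_. Km F G))"
    and "(\<lambda>x. fst (snd (x \<tau>))) \<in> borel_measurable (PiM {..<T} (\<lambda>_. Km F G))"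
    and "(\<lambda>x. snd (snd (x \<tau>))) \<in> borel_measurable (PiM {..<T} (\<lambda>_. Km F G))"
proof -
  have xt: "(\<lambda>x. x \<tau>) \<in> measurable (PiM {..<T} (\<lambda>_. Km F G)) (borel \<Otimes>\<^sub>M (borel \<Otimes>\<^sub>M borel))"
    using measurable_component_singleton[of \<tau> "{..<T}" "\<lambda>_. Km F G"] assms
    by (simp add: measurable_cong_sets[OF refl sets_K])
  show "(\<lambda>x. fst (x \<tau>)) \<in> borel_measurable (PiM {..<T} (\<lambda>_. Km F G))"
    using xt by measurable
  show "(\<lambda>x. fst (snd (x \<tau>))) \<in> borel_measurable (PiM {..<T} (\<lambda>_. Km F G))"
    using xt by measurable
  show "(\<lambda>x. snd (snd (x \<tau>))) \<in> borel_measurable (PiM {..<T} (\<lambda>_. Km F G))"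
    using xt by measurable
qed

lemma cc_meas[measurable]: "(\<lambda>z. cc vbar (fst z) (snd z)) \<in> borel_measurable (borel \<Otimes>\<^sub>M borel)"
  unfolding cc_def by measurable

lemma strat_dec_meas:
  assumes \<pi>[measurable]: "\<pi> \<in> borel_measurable borel"
  shows "t < T \<Longrightarrow> Measurable.pred (PiM {..<T} (\<lambda>_. Km F G)) (\<lambda>x. sdec I vbar \<rho> T \<pi> x t)"
proof (induction t rule: less_induct)
  case (less t)
  have IH[measurable]: "\<And>\<tau>. \<tau> \<in> {..<t} \<Longrightarrow> Measurable.pred (PiM {..<T} (\<lambda>_. Km F G)) (\<lambda>x. sdec I vbar \<rho> T \<pi> x \<tau>)"
    using less by auto
  note cm[measurable] = comp_meas[OF less.prems]
  have cmt: "\<And>\<tau>. \<tau> \<in> {..<t} \<Longrightarrow> (\<lambda>x. cc vbar (fst (x \<tau>)) (fst (snd (x \<tau>)))) \<in> borel_measurable (PiM {..<T} (\<lambda>_. Km F G))"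
    using comp_meas less.prems by (intro meas2[OF cc_meas]) auto
  have sm: "(\<lambda>x. \<Sum>\<tau><t. if sdec I vbar \<rho> T \<pi> x \<tau> then cc vbar (fst (x \<tau>)) (fst (snd (x \<tau>))) else 0) \<in> borel_measurable (PiM {..<T} (\<lambda>_. Km F G))"
  proof (rule borel_measurable_sum)
    fix \<tau> assume "\<tau> \<in> {..<t}"
    note [measurable] = cmt[OF this]
    show "(\<lambda>x. if sdec I vbar \<rho> T \<pi> x \<tau> then cc vbar (fst (x \<tau>)) (fst (snd (x \<tau>))) else 0) \<in> borel_measurable (PiM {..<T} (\<lambda>_. Km F G))"
      using \<open>\<tau> \<in> {..<t}\<close> by measurable
  qed
  have eq: "(\<lambda>x. sdec I vbar \<rho> T \<pi> x t) = (\<lambda>x. (\<Sum>\<tau><t. if sdec I vbar \<rho> T \<pi> x \<tau> then cc vbar (fst (x \<tau>)) (fst (snd (x \<tau>))) else 0) + vbar \<le> \<rho> * real T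
    \<and> snd (snd (x t)) < \<pi> (fst (x t)))"
    by (rule ext, rule strat_decision)
  show ?case unfolding eq using sm by measurable
qed

end

lemma U_lt:
  assumes "0 \<le> a" "a \<le> 1"
  shows "(\<integral>\<^sup>+\<gamma>. (if \<gamma> < a then 1 else 0) \<partial>Um) = ennreal a"
proof -
  have "(\<integral>\<^sup>+\<gamma>. (if \<gamma> < a then 1 else 0) \<partial>Um) = (\<integral>\<^sup>+\<gamma>. indicator {..<a} \<gamma> \<partial>Um)"
    by (intro nn_integral_cong) (auto simp: indicator_def)
  also have "\<dots> = emeasure Um {..<a}"
    by (rule nn_integral_indicator) (simp add: sets_Um)
  also have "\<dots> = emeasure lborel ({0..1} \<inter> {..<a}) / emeasure lborel {0..1::real}"
    unfolding Um_def by (rule emeasure_uniform_measure) auto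
  also have "{0..1} \<inter> {..<a} = {0..<a}" using assms by auto
  also have "emeasure lborel {0..<a} / emeasure lborel {0..1::real} = ennreal a"
    using assms by (simp add: divide_ennreal_def)
  finally show ?thesis .
qed

context two_dists begin

lemma coord_integral:
  fixes f :: "real \<times> real \<times> real \<Rightarrow> real"
  assumes t: "t < T" and f: "f \<in> borel_measurable (Km F G)"
  shows "integral\<^sup>L (PiM {..<T} (\<lambda>_. Km F G)) (\<lambda>x. f (x t)) = integral\<^sup>L (Km F G) f"
proof -
  have "distr (PiM {..<T} (\<lambda>_. Km F G)) (Km F G) (\<lambda>x. x t) = Km F G"
    by (rule distr_PiM_component) (use prob_K t in auto)
  then have "integral\<^sup>L (Km F G) f = integral\<^sup>L (distr (PiM {..<T} (\<lambda>_. Km F G)) (Km F G) (\<lambda>x. x t)) f"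
    by simp
  also have "\<dots> = integral\<^sup>L (PiM {..<T} (\<lambda>_. Km F G)) (\<lambda>x. f (x t))"
    by (rule integral_distr[OF _ f]) (use t in simp)
  finally show ?thesis by simp
qed

lemma K_nn:
  assumes a[measurable]: "a \<in> borel_measurable borel" and a01: "\<And>v. 0 \<le> a v \<and> a v \<le> 1"
    and g: "(\<lambda>z. g (fst z) (snd z)) \<in> borel_measurable (borel \<Otimes>\<^sub>M borel)" and g0: "\<And>u v. 0 \<le> g u v"
  shows "(\<integral>\<^sup>+y. ennreal ((if snd (snd y) < a (fst y) then 1 else 0) * g (fst y) (fst (snd y))) \<partial>Km F G)
       = (\<integral>\<^sup>+z. ennreal (a (fst z) * g (fst z) (snd z)) \<partial>(F \<Otimes>\<^sub>M G))"
proof -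
  interpret PU: prob_space Um by (rule prob_Um)
  interpret PG: prob_space G by (rule G)
  interpret PF: prob_space F by (rule F)
  interpret PGU: prob_space "G \<Otimes>\<^sub>M Um" by (intro prob_space_pair G prob_Um)
  note gA[measurable (raw)] = meas2[OF g]
  have "(\<integral>\<^sup>+y. ennreal ((if snd (snd y) < a (fst y) then 1 else 0) * g (fst y) (fst (snd y))) \<partial>Km F G)
      = (\<integral>\<^sup>+v. (\<integral>\<^sup>+w. ennreal ((if snd w < a v then 1 else 0) * g v (fst w)) \<partial>(G \<Otimes>\<^sub>M Um)) \<partial>F)"
    unfolding Km_def
    by (rule PGU.nn_integral_fst[symmetric, where f="\<lambda>y. ennreal ((if snd (snd y) < a (fst y) then 1 else 0) * g (fst y) (fst (snd y)))", simplified]) measurable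
  also have "\<dots> = (\<integral>\<^sup>+v. (\<integral>\<^sup>+p. ennreal (a v * g v p) \<partial>G) \<partial>F)"
  proof (rule nn_integral_cong)
    fix v :: real
    have "(\<integral>\<^sup>+w. ennreal ((if snd w < a v then 1 else 0) * g v (fst w)) \<partial>(G \<Otimes>\<^sub>M Um))
        = (\<integral>\<^sup>+p. (\<integral>\<^sup>+\<gamma>. ennreal ((if \<gamma> < a v then 1 else 0) * g v p) \<partial>Um) \<partial>G)"
      by (rule PU.nn_integral_fst[symmetric, where f="\<lambda>w. ennreal ((if snd w < a v then 1 else 0) * g v (fst w))", simplified]) measurable
    also have "\<dots> = (\<integral>\<^sup>+p. ennreal (g v p) * (\<integral>\<^sup>+\<gamma>. (if \<gamma> < a v then 1 else 0) \<partial>Um) \<partial>G)"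
    proof (intro nn_integral_cong)
      fix p
      have "(\<integral>\<^sup>+\<gamma>. ennreal ((if \<gamma> < a v then 1 else 0) * g v p) \<partial>Um) = (\<integral>\<^sup>+\<gamma>. ennreal (g v p) * (if \<gamma> < a v then 1 else 0) \<partial>Um)"
        by (intro nn_integral_cong) auto
      also have "\<dots> = ennreal (g v p) * (\<integral>\<^sup>+\<gamma>. (if \<gamma> < a v then 1 else 0) \<partial>Um)"
        by (rule nn_integral_cmult) measurable
      finally show "(\<integral>\<^sup>+\<gamma>. ennreal ((if \<gamma> < a v then 1 else 0) * g v p) \<partial>Um) = ennreal (g v p) * (\<integral>\<^sup>+\<gamma>. (if \<gamma> < a v then 1 else 0) \<partial>Um)" .
    qed
    also have "\<dots> = (\<integral>\<^sup>+p. ennreal (a v * g v p) \<partial>G)"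
      using a01[of v] g0 by (intro nn_integral_cong) (simp add: U_lt ennreal_mult' mult.commute)
    finally show "(\<integral>\<^sup>+w. ennreal ((if snd w < a v then 1 else 0) * g v (fst w)) \<partial>(G \<Otimes>\<^sub>M Um)) = (\<integral>\<^sup>+p. ennreal (a v * g v p) \<partial>G)" .
  qed
  also have "\<dots> = (\<integral>\<^sup>+z. ennreal (a (fst z) * g (fst z) (snd z)) \<partial>(F \<Otimes>\<^sub>M G))"
    by (subst PG.nn_integral_fst[symmetric]) (auto simp: mult.commute)
  finally show ?thesis .
qed

lemma K_int:
  assumes a[measurable]: "a \<in> borel_measurable borel" and a01: "\<And>v. 0 \<le> a v \<and> a v \<le> 1"
    and g: "(\<lambda>z. g (fst z) (snd z)) \<in> borel_measurable (borel \<Otimes>\<^sub>M borel)" and g0: "\<And>u v. 0 \<le> g u v"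
  shows "integral\<^sup>L (Km F G) (\<lambda>y. (if snd (snd y) < a (fst y) then 1 else 0) * g (fst y) (fst (snd y)))
       = integral\<^sup>L (F \<Otimes>\<^sub>M G) (\<lambda>z. a (fst z) * g (fst z) (snd z))"
proof -
  note gA[measurable (raw)] = meas2[OF g]
  have "integral\<^sup>L (Km F G) (\<lambda>y. (if snd (snd y) < a (fst y) then 1 else 0) * g (fst y) (fst (snd y)))
      = enn2real (\<integral>\<^sup>+y. ennreal ((if snd (snd y) < a (fst y) then 1 else 0) * g (fst y) (fst (snd y))) \<partial>Km F G)"
    by (rule integral_eq_nn_integral) (auto simp: g0)
  also have "\<dots> = enn2real (\<integral>\<^sup>+z. ennreal (a (fst z) * g (fst z) (snd z)) \<partial>(F \<Otimes>\<^sub>M G))"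
    by (simp add: K_nn[OF a a01 g g0])
  also have "\<dots> = integral\<^sup>L (F \<Otimes>\<^sub>M G) (\<lambda>z. a (fst z) * g (fst z) (snd z))"
    by (rule integral_eq_nn_integral[symmetric]) (auto simp: g0 a01)
  finally show ?thesis .
qed

end

context two_dists begin

lemma coords_indep:
  assumes T: "0 < T"
  shows "prob_space.indep_vars (PiM {..<T} (\<lambda>_. Km F G)) (\<lambda>_. Km F G) (\<lambda>t x. x t) {..<T}"
proof -
  interpret PM: prob_space "PiM {..<T} (\<lambda>_. Km F G)" by (intro prob_space_PiM prob_K)
  show ?thesis
  proof (subst PM.indep_vars_iff_distr_eq_PiM')
    show "{..<T} \<noteq> {}" using T by auto
    show "\<And>i. i \<in> {..<T} \<Longrightarrow> PM.random_variable (Km F G) (\<lambda>x. x i)" by simp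
    have "distr (PiM {..<T} (\<lambda>_. Km F G)) (PiM {..<T} (\<lambda>_. Km F G)) (\<lambda>x. \<lambda>i\<in>{..<T}. x i)
        = distr (PiM {..<T} (\<lambda>_. Km F G)) (PiM {..<T} (\<lambda>_. Km F G)) (\<lambda>x. x)"
      by (rule distr_cong) (auto simp: space_PiM PiE_iff extensional_restrict)
    also have "\<dots> = PiM {..<T} (\<lambda>_. Km F G)" by (rule distr_id)
    also have "\<dots> = PiM {..<T} (\<lambda>i. distr (PiM {..<T} (\<lambda>_. Km F G)) (Km F G) (\<lambda>x. x i))"
      by (rule PiM_cong) (auto intro!: distr_PiM_component[symmetric] prob_K)
    finally show "distr (PiM {..<T} (\<lambda>_. Km F G)) (PiM {..<T} (\<lambda>_. Km F G)) (\<lambda>x. \<lambda>i\<in>{..<T}. x i)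
        = PiM {..<T} (\<lambda>i. distr (PiM {..<T} (\<lambda>_. Km F G)) (Km F G) (\<lambda>x. x i))" .
  qed
qed

end

lemma Yv_meas:
  assumes [measurable]: "\<pi> \<in> borel_measurable borel"
  shows "Yv vbar \<pi> \<in> borel_measurable (borel \<Otimes>\<^sub>M (borel \<Otimes>\<^sub>M borel))"
proof -
  have "Yv vbar \<pi> = (\<lambda>y. if snd (snd y) < \<pi> (fst y) then cc vbar (fst y) (fst (snd y)) else 0)"
    by (simp add: fun_eq_iff Yv_def)
  also have "\<dots> \<in> borel_measurable (borel \<Otimes>\<^sub>M (borel \<Otimes>\<^sub>M borel))"
    unfolding cc_def by measurable
  finally show ?thesis .
qed

context vdists begin

lemma hoeff:
  assumes T: "0 < T" and \<pi>[measurable]: "\<pi> \<in> borel_measurable borel" and e: "0 \<le> e"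
  shows "measure (PiM {..<T} (\<lambda>_. Km F G)) {x \<in> space (PiM {..<T} (\<lambda>_. Km F G)).
      (\<Sum>t<T. Yv vbar \<pi> (x t)) \<ge> (\<Sum>t<T. integral\<^sup>L (PiM {..<T} (\<lambda>_. Km F G)) (\<lambda>x. Yv vbar \<pi> (x t))) + e}
     \<le> exp (- 2 * e\<^sup>2 / (real T * vbar\<^sup>2))"
proof -
  let ?M = "PiM {..<T} (\<lambda>_. Km F G)"
  interpret PM: prob_space ?M by (intro prob_space_PiM prob_K)
  have Ym: "Yv vbar \<pi> \<in> measurable (Km F G) borel"
    using Yv_meas[OF \<pi>, of vbar] by (simp add: measurable_cong_sets[OF sets_K refl])
  have ind: "PM.indep_vars (\<lambda>_. borel) (\<lambda>t x. Yv vbar \<pi> (x t)) {..<T}"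
    by (rule PM.indep_vars_compose2[OF coords_indep[OF T]]) (use Ym in simp)
  interpret H: Hoeffding_ineq ?M "{..<T}" "\<lambda>t x. Yv vbar \<pi> (x t)" "\<lambda>_. 0" "\<lambda>_. vbar"
    "\<Sum>t<T. integral\<^sup>L ?M (\<lambda>x. Yv vbar \<pi> (x t))"
    by unfold_locales (use ind vbar in \<open>auto simp: Yv_bounds\<close>)
  have "(\<Sum>i\<in>{..<T}. ((\<lambda>_. vbar) i - (\<lambda>_. 0) i)\<^sup>2) = real T * vbar\<^sup>2" by simp
  moreover have "(\<Sum>i\<in>{..<T}. ((\<lambda>_. vbar) i - (\<lambda>_. 0) i)\<^sup>2) > 0" using T vbar by simp
  ultimately show ?thesis using H.Hoeffding_ineq_ge[OF e] by simp
qed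

end

context vdists begin

lemma EY:
  assumes t: "t < T" and \<pi>[measurable]: "\<pi> \<in> borel_measurable borel" and \<pi>01: "\<And>v. 0 \<le> \<pi> v \<and> \<pi> v \<le> 1"
    and q: "0 \<le> q" "q \<le> 1"
  shows "integral\<^sup>L (PiM {..<T} (\<lambda>_. Km F G)) (\<lambda>x. Yv vbar (\<lambda>v. q * \<pi> v) (x t))
       = q * integral\<^sup>L (F \<Otimes>\<^sub>M G) (\<lambda>(v, p). \<pi> v * (if p \<le> v then p else 0))"
proof -
  have Ym: "Yv vbar (\<lambda>v. q * \<pi> v) \<in> borel_measurable (Km F G)"
    using Yv_meas[of "\<lambda>v. q * \<pi> v" vbar] by (simp add: measurable_cong_sets[OF sets_K refl])
  have a01: "0 \<le> q * \<pi> v \<and> q * \<pi> v \<le> 1" for v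
    using \<pi>01[of v] q by (auto intro: mult_le_one)
  have "integral\<^sup>L (PiM {..<T} (\<lambda>_. Km F G)) (\<lambda>x. Yv vbar (\<lambda>v. q * \<pi> v) (x t)) = integral\<^sup>L (Km F G) (Yv vbar (\<lambda>v. q * \<pi> v))"
    by (rule coord_integral[OF t Ym])
  also have "\<dots> = integral\<^sup>L (Km F G) (\<lambda>y. (if snd (snd y) < q * \<pi> (fst y) then 1 else 0) * cc vbar (fst y) (fst (snd y)))"
    by (intro Bochner_Integration.integral_cong) (auto simp: Yv_def)
  also have "\<dots> = integral\<^sup>L (F \<Otimes>\<^sub>M G) (\<lambda>z. q * \<pi> (fst z) * cc vbar (fst z) (snd z))"
    by (rule K_int[where a="\<lambda>v. q * \<pi> v", OF _ a01 cc_meas]) (auto simp: cc_bounds vbar less_imp_le)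
  also have "\<dots> = integral\<^sup>L (F \<Otimes>\<^sub>M G) (\<lambda>z. q * (\<pi> (fst z) * (if snd z \<le> fst z then snd z else 0)))"
    by (rule integral_cong_AE) (auto simp: cc_def intro!: eventually_mono[OF AE_FG])
  also have "\<dots> = q * integral\<^sup>L (F \<Otimes>\<^sub>M G) (\<lambda>(v, p). \<pi> v * (if p \<le> v then p else 0))"
    by (simp add: case_prod_beta')
  finally show ?thesis .
qed

lemma ER:
  assumes t: "t < T" and \<pi>[measurable]: "\<pi> \<in> borel_measurable borel" and \<pi>01: "\<And>v. 0 \<le> \<pi> v \<and> \<pi> v \<le> 1"
    and q: "0 \<le> q" "q \<le> 1"
  shows "integral\<^sup>L (PiM {..<T} (\<lambda>_. Km F G)) (\<lambda>x. (if snd (snd (x t)) < q * \<pi> (fst (x t)) then 1 else 0) * max 0 (fst (x t) - fst (snd (x t))))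
       = q * integral\<^sup>L (F \<Otimes>\<^sub>M G) (\<lambda>(v, p). \<pi> v * max 0 (v - p))"
proof -
  have hm: "(\<lambda>z::real\<times>real. max 0 (fst z - snd z)) \<in> borel_measurable (borel \<Otimes>\<^sub>M borel)" by measurable
  have fm: "(\<lambda>y::real\<times>real\<times>real. (if snd (snd y) < q * \<pi> (fst y) then 1 else 0) * max 0 (fst y - fst (snd y))) \<in> borel_measurable (Km F G)"
    by (simp add: measurable_cong_sets[OF sets_K refl])
  have a01: "0 \<le> q * \<pi> v \<and> q * \<pi> v \<le> 1" for v
    using \<pi>01[of v] q by (auto intro: mult_le_one)
  have "integral\<^sup>L (PiM {..<T} (\<lambda>_. Km F G)) (\<lambda>x. (if snd (snd (x t)) < q * \<pi> (fst (x t)) then 1 else 0) * max 0 (fst (x t) - fst (snd (x t))))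
      = integral\<^sup>L (Km F G) (\<lambda>y. (if snd (snd y) < q * \<pi> (fst y) then 1 else 0) * max 0 (fst y - fst (snd y)))"
    by (rule coord_integral[OF t fm])
  also have "\<dots> = integral\<^sup>L (F \<Otimes>\<^sub>M G) (\<lambda>z. q * \<pi> (fst z) * max 0 (fst z - snd z))"
    by (rule K_int[where a="\<lambda>v. q * \<pi> v" and g="\<lambda>a b. max 0 (a - b)", OF _ a01 hm]) auto
  also have "\<dots> = q * integral\<^sup>L (F \<Otimes>\<^sub>M G) (\<lambda>(v, p). \<pi> v * max 0 (v - p))"
    by (simp add: case_prod_beta' mult.assoc)
  finally show ?thesis .
qed

end

context vdists begin

lemma rev_meas:
  assumes \<pi>[measurable]: "\<pi> \<in> borel_measurable borel"
  shows "revenue I (strat vbar \<rho> T \<pi>) T \<in> borel_measurable (PiM {..<T} (\<lambda>_. Km F G))"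
proof -
  have "revenue I (strat vbar \<rho> T \<pi>) T = (\<lambda>x. \<Sum>t<T. if sdec I vbar \<rho> T \<pi> x t then max 0 (fst (x t) - fst (snd (x t))) else 0)"
    by (simp add: fun_eq_iff revenue_def)
  also have "\<dots> \<in> borel_measurable (PiM {..<T} (\<lambda>_. Km F G))"
  proof (rule borel_measurable_sum)
    fix t assume "t \<in> {..<T}"
    then have t: "t < T" by simp
    note [measurable] = strat_dec_meas[OF \<pi> t, of I vbar \<rho>] comp_meas[OF t]
    show "(\<lambda>x. if sdec I vbar \<rho> T \<pi> x t then max 0 (fst (x t) - fst (snd (x t))) else 0) \<in> borel_measurable (PiM {..<T} (\<lambda>_. Km F G))"
      by measurable
  qed
  finally show ?thesis .
qed

end

context vdists begin

lemma lower_T: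
  assumes rho: "0 < \<rho>" and T: "0 < T"
    and \<pi>[measurable]: "\<pi> \<in> borel_measurable borel" and \<pi>01: "\<And>v. 0 \<le> \<pi> v \<and> \<pi> v \<le> 1"
    and cons: "integral\<^sup>L (F \<Otimes>\<^sub>M G) (\<lambda>(v, p). \<pi> v * (if p \<le> v then p else 0)) \<le> \<rho>"
    and q: "0 \<le> q" "q \<le> 1" and e: "0 \<le> e" and key: "q * \<rho> * real T + e \<le> \<rho> * real T - vbar"
  shows "real T * q * integral\<^sup>L (F \<Otimes>\<^sub>M G) (\<lambda>(v, p). \<pi> v * max 0 (v - p))
           - real T * vbar * exp (- 2 * e\<^sup>2 / (real T * vbar\<^sup>2))
         \<le> integral\<^sup>L (PiM {..<T} (\<lambda>_. Km F G)) (revenue I (strat vbar \<rho> T (\<lambda>v. q * \<pi> v)) T)"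
proof -
  let ?M = "PiM {..<T} (\<lambda>_. Km F G)"
  let ?p = "\<lambda>v. q * \<pi> v"
  interpret PM: prob_space ?M by (intro prob_space_PiM prob_K)
  have pm[measurable]: "?p \<in> borel_measurable borel" by measurable
  define L where "L = integral\<^sup>L (F \<Otimes>\<^sub>M G) (\<lambda>(v, p). \<pi> v * max 0 (v - p))"
  define Lc where "Lc = integral\<^sup>L (F \<Otimes>\<^sub>M G) (\<lambda>(v, p). \<pi> v * (if p \<le> v then p else 0))"
  define Ys where "Ys x = (\<Sum>t<T. Yv vbar ?p (x t))" for x
  define \<mu> where "\<mu> = (\<Sum>t<T. integral\<^sup>L ?M (\<lambda>x. Yv vbar ?p (x t)))"
  have \<mu>_eq: "\<mu> = real T * (q * Lc)"
  proof -
    have "\<mu> = (\<Sum>t<T. q * Lc)"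
      unfolding \<mu>_def Lc_def by (intro sum.cong refl EY[OF _ \<pi> \<pi>01 q]) simp
    then show ?thesis by simp
  qed
  have \<mu>_le: "\<mu> \<le> q * \<rho> * real T"
  proof -
    have "q * real T * Lc \<le> q * real T * \<rho>" using cons q unfolding Lc_def by (intro mult_left_mono) auto
    then show ?thesis unfolding \<mu>_eq by (simp add: algebra_simps)
  qed
  have Ysm[measurable]: "Ys \<in> borel_measurable ?M"
  proof -
    have "(\<lambda>x. Yv vbar ?p (x t)) \<in> borel_measurable ?M" if "t < T" for t
    proof -
      have xt: "(\<lambda>x. x t) \<in> measurable ?M (borel \<Otimes>\<^sub>M (borel \<Otimes>\<^sub>M borel))"
        using measurable_component_singleton[of t "{..<T}" "\<lambda>_. Km F G"] that
        by (simp add: measurable_cong_sets[OF refl sets_K])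
      show ?thesis using measurable_comp[OF xt Yv_meas[OF pm]] by (simp add: comp_def)
    qed
    then show ?thesis unfolding Ys_def[abs_def] by (intro borel_measurable_sum) auto
  qed
  define Bad where "Bad = {x \<in> space ?M. \<rho> * real T < Ys x + vbar}"
  have Bad_sets[measurable]: "Bad \<in> sets ?M" unfolding Bad_def by measurable
  have "Bad \<subseteq> {x \<in> space ?M. \<mu> + e \<le> Ys x}"
    using \<mu>_le key unfolding Bad_def by auto
  then have "measure ?M Bad \<le> measure ?M {x \<in> space ?M. \<mu> + e \<le> Ys x}"
    by (intro PM.finite_measure_mono) measurable
  also have "\<dots> \<le> exp (- 2 * e\<^sup>2 / (real T * vbar\<^sup>2))"
    using hoeff[OF T pm e] unfolding Ys_def \<mu>_def by simp
  finally have PBad: "measure ?M Bad \<le> exp (- 2 * e\<^sup>2 / (real T * vbar\<^sup>2))" .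
  define Rf where "Rf x = (\<Sum>t<T. (if snd (snd (x t)) < ?p (fst (x t)) then 1 else 0) * max 0 (fst (x t) - fst (snd (x t))))" for x
  have termm: "(\<lambda>x. (if snd (snd (x t)) < ?p (fst (x t)) then 1 else 0) * max 0 (fst (x t) - fst (snd (x t)))) \<in> borel_measurable ?M" if "t < T" for t
  proof -
    note [measurable] = comp_meas[OF that]
    show ?thesis by measurable
  qed
  have termi: "integrable ?M (\<lambda>x. (if snd (snd (x t)) < ?p (fst (x t)) then 1 else 0) * max 0 (fst (x t) - fst (snd (x t))))" if "t < T" for t
  proof (rule PM.integrable_const_bound[OF _ termm[OF that]])
    show "AE x in ?M. norm ((if snd (snd (x t)) < ?p (fst (x t)) then 1 else 0) * max 0 (fst (x t) - fst (snd (x t)))) \<le> vbar"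
      by (rule eventually_mono[OF AE_M]) (use that in auto)
  qed
  have Rfi: "integrable ?M Rf" unfolding Rf_def[abs_def] using termi by (intro Bochner_Integration.integrable_sum) auto
  have ERf: "integral\<^sup>L ?M Rf = real T * (q * L)"
    unfolding Rf_def[abs_def] L_def
  proof (subst Bochner_Integration.integral_sum)
    show "\<And>i. i \<in> {..<T} \<Longrightarrow> integrable ?M (\<lambda>x. (if snd (snd (x i)) < ?p (fst (x i)) then 1 else 0) * max 0 (fst (x i) - fst (snd (x i))))"
      using termi by auto
    have "(\<Sum>i<T. integral\<^sup>L ?M (\<lambda>x. (if snd (snd (x i)) < ?p (fst (x i)) then 1 else 0) * max 0 (fst (x i) - fst (snd (x i)))))
        = (\<Sum>i<T. q * integral\<^sup>L (F \<Otimes>\<^sub>M G) (\<lambda>(v, p). \<pi> v * max 0 (v - p)))"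
      by (intro sum.cong refl ER[OF _ \<pi> \<pi>01 q]) simp
    then show "(\<Sum>i<T. integral\<^sup>L ?M (\<lambda>x. (if snd (snd (x i)) < ?p (fst (x i)) then 1 else 0) * max 0 (fst (x i) - fst (snd (x i)))))
        = real T * (q * integral\<^sup>L (F \<Otimes>\<^sub>M G) (\<lambda>(v, p). \<pi> v * max 0 (v - p)))" by simp
  qed
  have Rm: "revenue I (strat vbar \<rho> T ?p) T \<in> borel_measurable ?M" by (rule rev_meas[OF pm])
  have revi: "integrable ?M (revenue I (strat vbar \<rho> T ?p) T)"
  proof (rule PM.integrable_const_bound[OF _ Rm])
    show "AE x in ?M. norm (revenue I (strat vbar \<rho> T ?p) T x) \<le> real T * vbar"
    proof (rule eventually_mono[OF AE_M])
      fix x :: outcome assume x: "\<forall>t<T. (0 \<le> fst (x t) \<and> fst (x t) \<le> vbar) \<and> (0 \<le> fst (snd (x t)) \<and> fst (snd (x t)) \<le> vbar) \<and> (0 \<le> snd (snd (x t)) \<and> snd (snd (x t)) \<le> 1)"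
      have "revenue I (strat vbar \<rho> T ?p) T x \<le> (\<Sum>t<T. vbar)"
        unfolding revenue_def by (intro sum_mono) (use x vbar in auto)
      moreover have "0 \<le> revenue I (strat vbar \<rho> T ?p) T x"
        unfolding revenue_def by (intro sum_nonneg) auto
      ultimately show "norm (revenue I (strat vbar \<rho> T ?p) T x) \<le> real T * vbar" by simp
    qed
  qed
  have AEsp: "AE x in ?M. x \<in> space ?M \<and> (\<forall>t<T. (0 \<le> fst (x t) \<and> fst (x t) \<le> vbar) \<and> (0 \<le> fst (snd (x t)) \<and> fst (snd (x t)) \<le> vbar) \<and> (0 \<le> snd (snd (x t)) \<and> snd (snd (x t)) \<le> 1))"
    using AE_space AE_M by eventually_elim simp
  have AEle: "AE x in ?M. Rf x - real T * vbar * indicator Bad x \<le> revenue I (strat vbar \<rho> T ?p) T x"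
  proof (rule eventually_mono[OF AEsp])
    fix x :: outcome assume xx: "x \<in> space ?M \<and> (\<forall>t<T. (0 \<le> fst (x t) \<and> fst (x t) \<le> vbar) \<and> (0 \<le> fst (snd (x t)) \<and> fst (snd (x t)) \<le> vbar) \<and> (0 \<le> snd (snd (x t)) \<and> snd (snd (x t)) \<le> 1))"
    then have x: "\<forall>t<T. (0 \<le> fst (x t) \<and> fst (x t) \<le> vbar) \<and> (0 \<le> fst (snd (x t)) \<and> fst (snd (x t)) \<le> vbar) \<and> (0 \<le> snd (snd (x t)) \<and> snd (snd (x t)) \<le> 1)" by simp
    show "Rf x - real T * vbar * indicator Bad x \<le> revenue I (strat vbar \<rho> T ?p) T x"
    proof (cases "x \<in> Bad")
      case True
      have "Rf x \<le> (\<Sum>t<T. vbar)"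
        unfolding Rf_def by (intro sum_mono) (use x vbar in auto)
      moreover have "0 \<le> revenue I (strat vbar \<rho> T ?p) T x"
        unfolding revenue_def by (intro sum_nonneg) auto
      ultimately show ?thesis using True by simp
    next
      case False
      show ?thesis
      proof -
        from xx have True: "x \<in> space ?M" by simp
        with False have good: "Ys x + vbar \<le> \<rho> * real T" unfolding Bad_def by auto
        have "revenue I (strat vbar \<rho> T ?p) T x = Rf x"
          unfolding revenue_def Rf_def
          using coupling[OF less_imp_le[OF vbar] good[unfolded Ys_def], of _ I] by (intro sum.cong) auto
        then show ?thesis using False by simp
      qed
    qed
  qed
  have Bi: "integrable ?M (\<lambda>x. real T * vbar * indicator Bad x)"
    by (intro integrable_mult_right integrable_real_indicator) (auto simp: Bad_sets less_top[symmetric] PM.emeasure_finite)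
  have "integral\<^sup>L ?M (\<lambda>x. Rf x - real T * vbar * indicator Bad x) \<le> integral\<^sup>L ?M (revenue I (strat vbar \<rho> T ?p) T)"
    by (rule integral_mono_AE[OF Bochner_Integration.integrable_diff[OF Rfi Bi] revi AEle])
  moreover have "integral\<^sup>L ?M (\<lambda>x. Rf x - real T * vbar * indicator Bad x) = real T * (q * L) - real T * vbar * measure ?M Bad"
    using Rfi Bi ERf by (simp add: Bochner_Integration.integral_diff)
  moreover have "real T * vbar * measure ?M Bad \<le> real T * vbar * exp (- 2 * e\<^sup>2 / (real T * vbar\<^sup>2))"
    using PBad vbar by (intro mult_left_mono) auto
  ultimately show ?thesis unfolding L_def by (simp add: mult.assoc)
qed

end

lemma s_ge1:
  assumes "3 \<le> (T::real)"
  shows "1 \<le> sqrt (T * ln T)" and "1 \<le> ln T"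
proof -
  have "ln 3 \<ge> (1::real)"
    using exp_le by (subst ln_ge_iff) auto
  moreover have "ln 3 \<le> ln T" using assms by simp
  ultimately show l: "1 \<le> ln T" by simp
  have "1 * 1 \<le> T * ln T" using assms l by (intro mult_mono) auto
  then show "1 \<le> sqrt (T * ln T)" by simp
qed

lemma exp_bound:
  assumes "3 \<le> (T::real)" "0 < vbar"
  shows "exp (- 2 * (vbar * sqrt (T * ln T))\<^sup>2 / (T * vbar\<^sup>2)) = 1 / T\<^sup>2"
proof -
  have l: "0 \<le> ln T" using s_ge1[OF assms(1)] by simp
  have T0: "0 < T" using assms by simp
  have "(vbar * sqrt (T * ln T))\<^sup>2 = vbar\<^sup>2 * (T * ln T)"
    using l T0 by (simp add: power_mult_distrib)
  then have "- 2 * (vbar * sqrt (T * ln T))\<^sup>2 / (T * vbar\<^sup>2) = - 2 * ln T"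
    using T0 assms(2) by (simp add: field_simps)
  moreover have "exp (- 2 * ln T) = 1 / T\<^sup>2"
  proof -
    have "exp (2 * ln T) = exp (ln T + ln T)" by simp
    also have "\<dots> = T * T" by (simp only: exp_add exp_ln[OF T0])
    finally have "exp (2 * ln T) = T\<^sup>2" by (simp add: power2_eq_square)
    then show ?thesis by (simp add: exp_minus inverse_eq_divide)
  qed
  ultimately show ?thesis by simp
qed

definition beta0 :: strategy where "beta0 t h v g = False"

lemma beta0_adm:
  assumes "0 < \<rho>"
  shows "admissible I vbar \<rho> F G T beta0" and "revenue I beta0 T = (\<lambda>_. 0)"
proof -
  show r: "revenue I beta0 T = (\<lambda>_. 0)"
    by (simp add: fun_eq_iff revenue_def decision_eq beta0_def)
  have "payment I beta0 T x = 0" for x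
    by (simp add: payment_def decision_eq beta0_def)
  then show "admissible I vbar \<rho> F G T beta0"
    using assms by (simp add: admissible_def budget_feasible_def r)
qed

lemma vdists_of:
  assumes "0 < vbar" "valid_dist vbar F" "valid_dist vbar G"
  shows "vdists F G vbar"
proof -
  have f: "prob_space F" "sets F = sets borel" "measure F {0..vbar} = 1"
    using assms(2) unfolding valid_dist_def by auto
  have g: "prob_space G" "sets G = sets borel" "measure G {0..vbar} = 1"
    using assms(3) unfolding valid_dist_def by auto
  show ?thesis unfolding vdists_def vdists_axioms_def two_dists_def
    using f g assms(1) by (intro conjI)
qed

lemma thr_facts:
  assumes vd: "vdists F G vbar" and rho: "0 < \<rho>"
  shows "thr_value I vbar \<rho> F G T \<le> OPT F G \<rho> T"
    and "\<And>\<beta>. admissible I vbar \<rho> F G T \<beta> \<Longrightarrow> integral\<^sup>L (sample_space F G T) (revenue I \<beta> T) \<le> thr_value I vbar \<rho> F G T"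
proof -
  interpret vdists F G vbar by (rule vd)
  let ?X = "(\<lambda>\<beta>. integral\<^sup>L (sample_space F G T) (revenue I \<beta> T)) ` {\<beta>. admissible I vbar \<rho> F G T \<beta>}"
  have ne: "?X \<noteq> {}" using beta0_adm[OF rho] by blast
  have ub: "\<And>y. y \<in> ?X \<Longrightarrow> y \<le> OPT F G \<rho> T" using upper_one[OF _ rho] by blast
  show "thr_value I vbar \<rho> F G T \<le> OPT F G \<rho> T"
    unfolding thr_value_def by (rule cSup_least[OF ne ub])
  fix \<beta> assume "admissible I vbar \<rho> F G T \<beta>"
  then show "integral\<^sup>L (sample_space F G T) (revenue I \<beta> T) \<le> thr_value I vbar \<rho> F G T"
    unfolding thr_value_def by (intro cSup_upper) (auto intro!: bdd_aboveI[where M="OPT F G \<rho> T"] ub)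
qed

lemma lower_main:
  assumes vb: "0 < vbar" and rho: "0 < \<rho>" and vd: "vdists F G vbar" and T3: "3 \<le> T"
  shows "OPT F G \<rho> T - (1 + vbar + 2 * vbar\<^sup>2 / \<rho>) * sqrt (real T * ln (real T)) \<le> thr_value I vbar \<rho> F G T"
proof -
  interpret vdists F G vbar by (rule vd)
  define s where "s = sqrt (real T * ln (real T))"
  define C where "C = 1 + vbar + 2 * vbar\<^sup>2 / \<rho>"
  have T3r: "3 \<le> real T" using T3 by simp
  have s1: "1 \<le> s" unfolding s_def using s_ge1(1)[OF T3r] .
  have T0: "0 < T" using T3 by simp
  define S where "S = Sup (LPset F G \<rho>)"
  have ne: "LPset F G \<rho> \<noteq> {}" using LP_zero[of \<rho>] rho by auto
  have Svb: "S \<le> vbar" unfolding S_def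
    by (rule cSup_least[OF ne]) (auto simp: LPset_def intro!: LP_le)
  have OPT_eq: "OPT F G \<rho> T = real T * S" by (simp add: OPT_LPset S_def)
  have thr0: "0 \<le> thr_value I vbar \<rho> F G T"
    using thr_facts(2)[OF vd rho beta0_adm(1)[OF rho, of I vbar F G T]] beta0_adm(2)[OF rho, of I T] by simp
  define a where "a = vbar * s"
  have a0: "0 \<le> a" unfolding a_def using vb s1 by simp
  have C_s: "vbar\<^sup>2 * (s + 1) / \<rho> \<le> 2 * vbar\<^sup>2 / \<rho> * s"
  proof -
    have "vbar\<^sup>2 * (s + 1) \<le> vbar\<^sup>2 * (2 * s)" using s1 by (intro mult_left_mono) auto
    then show ?thesis using rho by (simp add: divide_right_mono field_simps)
  qed
  show ?thesis
  proof (cases "\<rho> * real T < a + vbar")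
    case True
    have "real T * S \<le> real T * vbar" using Svb by (simp add: mult_left_mono)
    also have "real T * vbar = vbar * (\<rho> * real T) / \<rho>" using rho by simp
    also have "\<dots> \<le> vbar * (a + vbar) / \<rho>"
      using True vb rho by (intro divide_right_mono mult_left_mono) auto
    also have "vbar * (a + vbar) / \<rho> = vbar\<^sup>2 * (s + 1) / \<rho>"
      unfolding a_def by (simp add: power2_eq_square algebra_simps)
    also have "\<dots> \<le> 2 * vbar\<^sup>2 / \<rho> * s" by (rule C_s)
    also have "\<dots> \<le> C * s" unfolding C_def using s1 vb by (intro mult_right_mono) auto
    finally show ?thesis using thr0 OPT_eq unfolding C_def s_def by simp
  next
    case False
    define \<epsilon> where "\<epsilon> = (a + vbar) / (\<rho> * real T)"
    define q where "q = 1 - \<epsilon>"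
    have rT: "0 < \<rho> * real T" using rho T0 by simp
    have rT0: "\<rho> * real T \<noteq> 0" using rT by (metis less_irrefl)
    have eps0: "0 \<le> \<epsilon>" unfolding \<epsilon>_def using a0 vb rT by simp
    have eps1: "\<epsilon> \<le> 1" unfolding \<epsilon>_def using False rT by simp
    have epsT: "\<epsilon> * (\<rho> * real T) = a + vbar" using \<epsilon>_def nonzero_eq_divide_eq[OF rT0] by blast
    have "S - 1 / real T < S" using T0 by simp
    then obtain L where L: "L \<in> LPset F G \<rho>" and SL: "S - 1 / real T < L"
      using less_cSup_iff[OF ne LP_bdd] unfolding S_def by blast
    then obtain \<pi> where \<pi>m: "\<pi> \<in> borel_measurable borel" and \<pi>01: "\<And>v. 0 \<le> \<pi> v \<and> \<pi> v \<le> 1"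
      and cons: "integral\<^sup>L (F \<Otimes>\<^sub>M G) (\<lambda>(v, p). \<pi> v * (if p \<le> v then p else 0)) \<le> \<rho>"
      and Ldef: "L = integral\<^sup>L (F \<Otimes>\<^sub>M G) (\<lambda>(v, p). \<pi> v * max 0 (v - p))"
      unfolding LPset_def by blast
    have Lvb: "L \<le> vbar" unfolding Ldef by (rule LP_le[OF \<pi>m \<pi>01])
    have q01: "0 \<le> q" "q \<le> 1" unfolding q_def using eps0 eps1 by auto
    have key: "q * \<rho> * real T + a \<le> \<rho> * real T - vbar"
      unfolding q_def using epsT by (simp add: algebra_simps)
    have low: "real T * q * L - real T * vbar * exp (- 2 * a\<^sup>2 / (real T * vbar\<^sup>2))
         \<le> integral\<^sup>L (PiM {..<T} (\<lambda>_. Km F G)) (revenue I (strat vbar \<rho> T (\<lambda>v. q * \<pi> v)) T)"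
      unfolding Ldef by (rule lower_T[OF rho T0 \<pi>m \<pi>01 cons q01 a0 key])
    have ex: "exp (- 2 * a\<^sup>2 / (real T * vbar\<^sup>2)) = 1 / (real T)\<^sup>2"
      unfolding a_def s_def by (rule exp_bound[OF T3r vb])
    have adm: "admissible I vbar \<rho> F G T (strat vbar \<rho> T (\<lambda>v. q * \<pi> v))"
      unfolding admissible_def sample_space_Km
      using strat_budget[of vbar \<rho> I T] vb rho rev_meas[of "\<lambda>v. q * \<pi> v" I \<rho> T] \<pi>m by simp
    have E_le: "integral\<^sup>L (PiM {..<T} (\<lambda>_. Km F G)) (revenue I (strat vbar \<rho> T (\<lambda>v. q * \<pi> v)) T) \<le> thr_value I vbar \<rho> F G T"
      using thr_facts(2)[OF vd rho adm] by (simp add: sample_space_Km)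
    have t1: "real T * vbar * (1 / (real T)\<^sup>2) \<le> vbar"
    proof -
      have "real T * vbar * (1 / (real T)\<^sup>2) = vbar / real T" using T0 by (simp add: power2_eq_square)
      also have "\<dots> \<le> vbar" using T0 vb by (simp add: divide_le_eq)
      finally show ?thesis .
    qed
    have t2: "real T * q * L \<ge> real T * S - 1 - vbar\<^sup>2 * (s + 1) / \<rho>"
    proof -
      have "real T * q * L = real T * L - \<epsilon> * real T * L" unfolding q_def by (simp add: algebra_simps)
      moreover have "\<epsilon> * real T * L \<le> \<epsilon> * real T * vbar" using Lvb eps0 by (intro mult_left_mono) auto
      moreover have "\<epsilon> * real T * vbar = vbar\<^sup>2 * (s + 1) / \<rho>"
      proof -
        have "\<epsilon> * real T = (a + vbar) / \<rho>" using epsT rho by (simp add: field_simps)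
        then show ?thesis unfolding a_def by (simp add: power2_eq_square field_simps)
      qed
      moreover have "real T * L > real T * S - 1"
      proof -
        have "real T * (S - 1 / real T) < real T * L" using SL T0 by (intro mult_strict_left_mono) auto
        then show ?thesis using T0 by (simp add: right_diff_distrib)
      qed
      ultimately show ?thesis by linarith
    qed
    have t3: "1 + vbar \<le> (1 + vbar) * s" using s1 vb by simp
    have "OPT F G \<rho> T - C * s = real T * S - (1 + vbar) * s - 2 * vbar\<^sup>2 / \<rho> * s"
      unfolding OPT_eq C_def by (simp add: algebra_simps)
    also have "\<dots> \<le> real T * q * L - real T * vbar * (1 / (real T)\<^sup>2)"
      using t1 t2 t3 C_s by linarith
    also have "\<dots> \<le> thr_value I vbar \<rho> F G T" using low E_le ex by simp
    finally show ?thesis unfolding C_def s_def .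
  qed
qed

theorem proposition1:
  fixes vbar \<rho> :: real
  assumes "0 < vbar" and "0 < \<rho>" and "\<rho> \<le> vbar"
  shows "(\<forall>I F G T. valid_dist vbar F \<longrightarrow> valid_dist vbar G \<longrightarrow>
            thr_value I vbar \<rho> F G T \<le> OPT F G \<rho> T)
       \<and> (\<exists>C N. \<forall>I F G T. valid_dist vbar F \<longrightarrow> valid_dist vbar G \<longrightarrow> T \<ge> N \<longrightarrow>
            OPT F G \<rho> T - C * sqrt (real T * ln (real T)) \<le> thr_value I vbar \<rho> F G T)"
proof (intro conjI)
  show "\<forall>I F G T. valid_dist vbar F \<longrightarrow> valid_dist vbar G \<longrightarrow>
            thr_value I vbar \<rho> F G T \<le> OPT F G \<rho> T"
    using thr_facts(1)[OF vdists_of[OF assms(1)] assms(2)] by blast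
  show "\<exists>C N. \<forall>I F G T. valid_dist vbar F \<longrightarrow> valid_dist vbar G \<longrightarrow> T \<ge> N \<longrightarrow>
            OPT F G \<rho> T - C * sqrt (real T * ln (real T)) \<le> thr_value I vbar \<rho> F G T"
    using lower_main[OF assms(1,2) vdists_of[OF assms(1)]] by blast
qed

end
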